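(* Let $1\le T$ and $n\ge1$. Let $f_1,\dots,f_T\in\mathbb{R}^n$ be fixed vectors, $F=[f_1,\dots,f_T]\in\mathbb{R}^{n\times T}$, and let $\Lambda=(\lambda_{st})$, $\Gamma=(\gamma_{st})$ be strictly upper triangular $T\times T$ matrices. Let $A\sim\mathsf{GOE}(n)$ and define $x_t=Af_t+\sum_{s<t}\lambda_{st}x_s$ for $t\in[T]$. Let $\Sigma$ be a $T\times T$ positive semidefinite matrix, $(w_t)_{t\in[T]}$ a mean-zero Gaussian process in $\mathbb{R}^n$ with $\operatorname{cov}(w_s,w_t)=\Sigma_{st}\mathrm{I}_n$, and $y_t=\sum_{s<t}\gamma_{st}y_s+w_t$. Then for all $t\in[T]$, $$W_2^2\big(\mathcal L(x_t),\mathcal L(y_t)\big)=\tfrac{n-1}{n}(\sqrt2-1)^2\alpha_t^2+n\Big(\big(1+\tfrac{\sqrt2-1}{n}\big)\alpha_t-\beta_t\Big)^2,$$ where $$\alpha_t=\sqrt{\big[(\mathrm{I}-\Lambda)^{-\top}\tfrac1nF^\top F(\mathrm{I}-\Lambda)^{-1}\big]_{tt}},\qquad \beta_t=\sqrt{\big[(\mathrm{I}-\Gamma)^{-\top}\Sigma(\mathrm{I}-\Gamma)^{-1}\big]_{tt}}.$$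
   Context: $\mathsf{GOE}(n)$ denotes the law of a symmetric $n\times n$ random matrix with independent $\mathsf{N}(0,2/n)$ diagonal entries and independent $\mathsf{N}(0,1/n)$ entries below the diagonal. $\mathcal L(\cdot)$ denotes the law of a random vector. The quadratic Wasserstein distance between square-integrable probability measures $\mu,\nu$ on $\mathbb{R}^d$ is $W_2(\mu,\nu)=\big(\inf_{\pi\in\Pi(\mu,\nu)}\int\|u-v\|^2\,d\pi(u,v)\big)^{1/2}$, where $\Pi(\mu,\nu)$ is the set of couplings of $\mu$ and $\nu$. *)

theory Defs
  imports "HOL-Probability.Probability"
begin

definition normal_rv :: "'w measure \<Rightarrow> ('w \<Rightarrow> real) \<Rightarrow> real \<Rightarrow> real \<Rightarrow> bool" where
  "normal_rv M Z m v \<longleftrightarrow>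
     (if v = 0 then Z \<in> borel_measurable M \<and> (AE \<omega> in M. Z \<omega> = m)
      else 0 < v \<and> distributed M lborel Z (normal_density m (sqrt v)))"

text \<open>Row i, column j of a matrix B is B $ i $ j.\<close>
definition is_GOE :: "'w measure \<Rightarrow> ('w \<Rightarrow> real^('n::{finite,linorder})^('n::{finite,linorder})) \<Rightarrow> bool" where
  "is_GOE M A \<longleftrightarrow>
     A \<in> borel_measurable M \<and>
     (\<forall>\<omega>\<in>space M. \<forall>i j. A \<omega> $ i $ j = A \<omega> $ j $ i) \<and>
     prob_space.indep_vars M (\<lambda>_. borel) (\<lambda>(i,j) \<omega>. A \<omega> $ i $ j) {(i,j). j \<le> i} \<and>
     (\<forall>i. distributed M lborel (\<lambda>\<omega>. A \<omega> $ i $ i) (normal_density 0 (sqrt (2 / real CARD('n))))) \<and>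
     (\<forall>i j. j < i \<longrightarrow> distributed M lborel (\<lambda>\<omega>. A \<omega> $ i $ j) (normal_density 0 (sqrt (1 / real CARD('n)))))"

text \<open>Mean-zero Gaussian process (w_t) in R^n with cov(w_s,w_t) = Sigma_st I_n:
  every linear combination of the coordinates is normal with mean 0 and the
  corresponding variance.\<close>
definition gaussian_process_cov ::
  "'w measure \<Rightarrow> ('t::finite \<Rightarrow> 'w \<Rightarrow> real^'n::finite) \<Rightarrow> real^'t^'t \<Rightarrow> bool" where
  "gaussian_process_cov M w \<Sigma> \<longleftrightarrow>
     (\<forall>t. w t \<in> borel_measurable M) \<and>
     (\<forall>c :: 't \<Rightarrow> 'n \<Rightarrow> real.
        normal_rv M (\<lambda>\<omega>. \<Sum>t\<in>UNIV. \<Sum>i\<in>UNIV. c t i * (w t \<omega> $ i)) 0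
          (\<Sum>s\<in>UNIV. \<Sum>t\<in>UNIV. \<Sum>i\<in>UNIV. c s i * c t i * (\<Sigma> $ s $ t)))"

definition psd_matrix :: "real^('t::finite)^('t::finite) \<Rightarrow> bool" where
  "psd_matrix S \<longleftrightarrow> transpose S = S \<and> (\<forall>c :: real^'t. 0 \<le> c \<bullet> (S *v c))"

definition strictly_upper :: "real^('t::{finite,linorder})^('t::{finite,linorder}) \<Rightarrow> bool" where
  "strictly_upper L \<longleftrightarrow> (\<forall>s t. t \<le> s \<longrightarrow> L $ s $ t = 0)"

definition couplings :: "'a::euclidean_space measure \<Rightarrow> 'a measure \<Rightarrow> ('a \<times> 'a) measure set" where
  "couplings \<mu> \<nu> = {\<pi>. sets \<pi> = sets (borel \<Otimes>\<^sub>M borel) \<and> prob_space \<pi> \<and>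
       distr \<pi> borel fst = \<mu> \<and> distr \<pi> borel snd = \<nu>}"

definition W2_sq :: "'a::euclidean_space measure \<Rightarrow> 'a measure \<Rightarrow> ennreal" where
  "W2_sq \<mu> \<nu> = (INF \<pi>\<in>couplings \<mu> \<nu>. \<integral>\<^sup>+ p. ennreal ((norm (fst p - snd p))\<^sup>2) \<partial>\<pi>)"

end

theory Submission
  imports Defs
begin

lemma unit_upper_invertible:
  fixes L :: "real^('t::{finite,linorder})^('t::{finite,linorder})"
  assumes "strictly_upper L"
  shows "invertible (mat 1 - L)"
proof -
  have "\<forall>c. (mat 1 - L) *v c = 0 \<longrightarrow> c = 0"
  proof (intro allI impI)
    fix c :: "(real, 't) vec" assume eq: "(mat 1 - L) *v c = 0"
    show "c = 0"
    proof (rule ccontr)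
      assume "c \<noteq> 0"
      then have ne: "{s. c $ s \<noteq> 0} \<noteq> {}" by (auto simp: vec_eq_iff)
      define s0 where "s0 = Max {s. c $ s \<noteq> 0}"
      have s0: "c $ s0 \<noteq> 0" using Max_in[OF finite ne] by (simp add: s0_def)
      have big: "c $ t = 0" if "s0 < t" for t
      proof (rule ccontr)
        assume "c $ t \<noteq> 0"
        then have "t \<le> s0" using Max_ge[of "{s. c $ s \<noteq> 0}" t] by (simp add: s0_def)
        then show False using that by simp
      qed
      have "L $ s0 $ t * c $ t = 0" for t
      proof (cases "t \<le> s0")
        case True then show ?thesis using assms by (simp add: strictly_upper_def)
      next
        case False then show ?thesis using big by simp
      qed
      then have "((mat 1 - L) *v c) $ s0 = (\<Sum>j\<in>UNIV. (if s0 = j then c $ j else 0) - L $ s0 $ j * c $ j)"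
        unfolding matrix_vector_mult_def by (auto intro!: sum.cong simp: mat_def left_diff_distrib)
      also have "\<dots> = c $ s0"
        using \<open>\<And>t. L $ s0 $ t * c $ t = 0\<close> by (simp only: sum_subtractf) simp
      finally have "((mat 1 - L) *v c) $ s0 = c $ s0" .
      then show False using eq s0 by simp
    qed
  qed
  then show ?thesis
    using matrix_left_invertible_ker invertible_left_inverse by blast
qed

lemma matrix_inv_right':
  fixes A :: "real^'n^'n"
  assumes "invertible A" shows "A ** matrix_inv A = mat 1"
  using assms unfolding invertible_def matrix_inv_def by (rule someI_ex[THEN conjunct1])

lemma rec_solve:
  fixes L :: "real^('t::{finite,linorder})^('t::{finite,linorder})" and z g :: "'t \<Rightarrow> 'v::real_vector"
  assumes L: "strictly_upper L" and rec: "\<And>t. z t = g t + (\<Sum>s\<in>{s. s < t}. L $ s $ t *\<^sub>R z s)"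
  shows "z t = (\<Sum>s\<in>UNIV. matrix_inv (mat 1 - L) $ s $ t *\<^sub>R g s)"
proof -
  define D where "D = mat 1 - L"
  define C where "C = matrix_inv D"
  have DC: "D ** C = mat 1" unfolding C_def D_def
    by (rule matrix_inv_right'[OF unit_upper_invertible[OF L]])
  have g: "g s = (\<Sum>r\<in>UNIV. D $ r $ s *\<^sub>R z r)" for s
  proof -
    have "(\<Sum>r\<in>UNIV. D $ r $ s *\<^sub>R z r) = (\<Sum>r\<in>UNIV. (if r = s then 1 else 0) *\<^sub>R z r) - (\<Sum>r\<in>UNIV. L $ r $ s *\<^sub>R z r)"
      by (simp add: D_def mat_def scaleR_diff_left sum_subtractf)
    also have "(\<Sum>r\<in>UNIV. L $ r $ s *\<^sub>R z r) = (\<Sum>r\<in>{r. r < s}. L $ r $ s *\<^sub>R z r)"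
      by (rule sum.mono_neutral_right) (use L in \<open>auto simp: strictly_upper_def not_less\<close>)
    also have "(\<Sum>r\<in>UNIV. (if r = s then 1 else 0) *\<^sub>R z r) = (\<Sum>r\<in>UNIV. if r = s then z r else 0)"
      by (rule sum.cong) auto
    also have "\<dots> = z s" by simp
    finally show ?thesis using rec[of s] by simp
  qed
  have "(\<Sum>s\<in>UNIV. C $ s $ t *\<^sub>R g s) = (\<Sum>s\<in>UNIV. \<Sum>r\<in>UNIV. (D $ r $ s * C $ s $ t) *\<^sub>R z r)"
    by (simp add: g scaleR_sum_right mult.commute)
  also have "\<dots> = (\<Sum>r\<in>UNIV. (\<Sum>s\<in>UNIV. D $ r $ s * C $ s $ t) *\<^sub>R z r)"
    by (subst sum.swap) (simp add: scaleR_sum_left)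
  also have "\<dots> = (\<Sum>r\<in>UNIV. (D ** C) $ r $ t *\<^sub>R z r)"
    by (simp add: matrix_matrix_mult_def)
  also have "\<dots> = z t"
  proof -
    have "(\<Sum>r\<in>UNIV. (D ** C) $ r $ t *\<^sub>R z r) = (\<Sum>r\<in>UNIV. if r = t then z r else 0)"
      by (rule sum.cong) (auto simp: DC mat_def)
    then show ?thesis by simp
  qed
  finally show ?thesis by (simp add: C_def D_def)
qed

definition nlaw :: "real \<Rightarrow> real measure" where
  "nlaw v = (if v = 0 then return borel 0 else density lborel (\<lambda>x. ennreal (normal_density 0 (sqrt v) x)))"

lemma sets_nlaw[simp, measurable_cong]: "sets (nlaw v) = sets borel"
  by (simp add: nlaw_def)

lemma normal_rv_nonneg: "normal_rv M Z m v \<Longrightarrow> 0 \<le> v"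
  by (auto simp: normal_rv_def split: if_splits)

lemma normal_rv_measurable: "normal_rv M Z m v \<Longrightarrow> Z \<in> borel_measurable M"
  by (auto simp: normal_rv_def distributed_def split: if_splits)

lemma normal_rv_distr:
  assumes P: "prob_space M" and N: "normal_rv M Z 0 v"
  shows "distr M borel Z = nlaw v"
proof (cases "v = 0")
  case True
  interpret prob_space M by fact
  from N True have Zm[measurable]: "Z \<in> borel_measurable M" and AE: "AE \<omega> in M. Z \<omega> = 0"
    by (auto simp: normal_rv_def)
  show ?thesis
  proof (rule measure_eqI)
    show "sets (distr M borel Z) = sets (nlaw v)" by simp
    fix A :: "real set" assume "A \<in> sets (distr M borel Z)"
    then have A[measurable]: "A \<in> sets borel" by simp
    have "emeasure (distr M borel Z) A = emeasure M (Z -` A \<inter> space M)"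
      by (rule emeasure_distr) auto
    also have "\<dots> = indicator A (0::real)"
    proof (cases "0 \<in> A")
      case True
      have "emeasure M (Z -` A \<inter> space M) = 1"
        by (rule emeasure_eq_1_AE) (use AE True in auto)
      then show ?thesis using True by simp
    next
      case False
      have "emeasure M {\<omega>\<in>space M. Z \<omega> \<in> A} = 0"
        by (rule emeasure_eq_0_AE) (use AE False in auto)
      then show ?thesis using False by (simp add: vimage_def Int_def conj_commute)
    qed
    also have "\<dots> = emeasure (nlaw v) A" using True by (simp add: nlaw_def)
    finally show "emeasure (distr M borel Z) A = emeasure (nlaw v) A" .
  qed
next
  case False
  with N have D: "distributed M lborel Z (\<lambda>x. ennreal (normal_density 0 (sqrt v) x))"
    by (simp add: normal_rv_def)
  then have "distr M lborel Z = density lborel (\<lambda>x. ennreal (normal_density 0 (sqrt v) x))"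
    by (simp add: distributed_def)
  moreover have "distr M borel Z = distr M lborel Z"
    by (rule distr_cong) auto
  ultimately show ?thesis using False by (simp add: nlaw_def)
qed

lemma prob_space_nlaw: "0 \<le> v \<Longrightarrow> prob_space (nlaw v)"
  by (auto simp: nlaw_def prob_space_return prob_space_normal_density)

lemma nlaw_moment2:
  assumes "0 \<le> v"
  shows "integrable (nlaw v) (\<lambda>x. x\<^sup>2)" and "(\<integral>x. x\<^sup>2 \<partial>nlaw v) = v"
proof -
  have "integrable (nlaw v) (\<lambda>x. x\<^sup>2) \<and> (\<integral>x. x\<^sup>2 \<partial>nlaw v) = v"
  proof (cases "v = 0")
    case True
    have ae: "AE x in return borel (0::real). x\<^sup>2 = 0"
      by (subst AE_return) auto
    have "integrable (return borel (0::real)) (\<lambda>x. x\<^sup>2)"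
      by (subst integrable_cong_AE[OF _ _ ae]) auto
    then show ?thesis using True
      by (simp add: nlaw_def integral_return)
  next
    case False
    then have v: "0 < v" using assms by simp
    have i: "integrable lborel (\<lambda>x. normal_density 0 (sqrt v) x * (x - 0) ^ 2)"
      by (rule integrable_normal_moment) (simp add: v)
    have e: "(\<integral>x. normal_density 0 (sqrt v) x * (x - 0) ^ (2 * 1) \<partial>lborel) = fact (2 * 1) / ((2 / (sqrt v)\<^sup>2) ^ 1 * fact 1)"
      by (rule integral_normal_moment_even) (simp add: v)
    have nl: "nlaw v = density lborel (\<lambda>x. ennreal (normal_density 0 (sqrt v) x))"
      using False by (simp add: nlaw_def)
    have 1: "integrable (nlaw v) (\<lambda>x. x\<^sup>2)"
      unfolding nl using i by (subst integrable_density) auto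
    have "(\<integral>x. x\<^sup>2 \<partial>nlaw v) = (\<integral>x. normal_density 0 (sqrt v) x * (x - 0) ^ (2 * 1) \<partial>lborel)"
      unfolding nl by (subst integral_density) auto
    also have "\<dots> = v" using e v by simp
    finally show ?thesis using 1 by simp
  qed
  then show "integrable (nlaw v) (\<lambda>x. x\<^sup>2)" and "(\<integral>x. x\<^sup>2 \<partial>nlaw v) = v" by auto
qed

lemma normal_rv_cong:
  assumes "normal_rv M Z m v" and eq: "\<And>\<omega>. \<omega> \<in> space M \<Longrightarrow> Z \<omega> = Z' \<omega>"
  shows "normal_rv M Z' m v"
proof -
  have me: "Z \<in> borel_measurable M \<longleftrightarrow> Z' \<in> borel_measurable M"
    by (rule measurable_cong) (simp add: eq)
  have me2: "Z \<in> M \<rightarrow>\<^sub>M lborel \<longleftrightarrow> Z' \<in> M \<rightarrow>\<^sub>M lborel"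
    by (rule measurable_cong) (simp add: eq)
  have de: "distr M lborel Z = distr M lborel Z'"
    by (rule distr_cong) (auto simp: eq)
  have ae: "(AE \<omega> in M. Z \<omega> = m) \<longleftrightarrow> (AE \<omega> in M. Z' \<omega> = m)"
    by (rule AE_cong) (simp add: eq)
  show ?thesis using assms(1) me me2 de ae
    by (auto simp: normal_rv_def distributed_def)
qed

lemma normal_rv_zero: "Z \<in> borel_measurable M \<Longrightarrow> (\<And>\<omega>. \<omega> \<in> space M \<Longrightarrow> Z \<omega> = 0) \<Longrightarrow> normal_rv M Z 0 0"
  by (simp add: normal_rv_def)

lemma indep_normal_lincomb:
  fixes X :: "'i \<Rightarrow> 'w \<Rightarrow> real"
  assumes P: "prob_space M" and I: "finite I" and ind: "prob_space.indep_vars M (\<lambda>_. borel) X I"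
    and D: "\<And>i. i \<in> I \<Longrightarrow> distributed M lborel (X i) (normal_density 0 (\<sigma> i))"
    and pos: "\<And>i. i \<in> I \<Longrightarrow> 0 < \<sigma> i"
  shows "normal_rv M (\<lambda>\<omega>. \<Sum>i\<in>I. c i * X i \<omega>) 0 (\<Sum>i\<in>I. (c i)\<^sup>2 * (\<sigma> i)\<^sup>2)"
proof -
  interpret prob_space M by fact
  define J where "J = {i\<in>I. c i \<noteq> 0}"
  have J: "finite J" "J \<subseteq> I" using I by (auto simp: J_def)
  have s1: "(\<lambda>\<omega>. \<Sum>i\<in>I. c i * X i \<omega>) = (\<lambda>\<omega>. \<Sum>i\<in>J. c i * X i \<omega>)"
    by (intro ext sum.mono_neutral_right I J) (auto simp: J_def)
  have s2: "(\<Sum>i\<in>I. (c i)\<^sup>2 * (\<sigma> i)\<^sup>2) = (\<Sum>i\<in>J. (c i)\<^sup>2 * (\<sigma> i)\<^sup>2)"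
    by (intro sum.mono_neutral_right I J) (auto simp: J_def)
  have Xm[measurable]: "X i \<in> borel_measurable M" if "i \<in> I" for i
    using D[OF that] by (auto simp: distributed_def)
  show ?thesis
  proof (cases "J = {}")
    case True
    then show ?thesis unfolding s1 s2 by (simp add: normal_rv_def)
  next
    case False
    have DY: "distributed M lborel (\<lambda>\<omega>. 0 + c i * X i \<omega>) (normal_density (0 + c i * 0) (\<bar>c i\<bar> * \<sigma> i))" if "i \<in> J" for i
      by (rule normal_density_affine) (use that J D pos in \<open>auto simp: J_def\<close>)
    have indY: "indep_vars (\<lambda>_. borel) (\<lambda>i \<omega>. c i * X i \<omega>) J"
      by (rule indep_vars_compose2[where X=X]) (use indep_vars_subset[OF ind J(2)] in auto)
    have "distributed M lborel (\<lambda>\<omega>. \<Sum>i\<in>J. c i * X i \<omega>) (normal_density (\<Sum>i\<in>J. 0) (sqrt (\<Sum>i\<in>J. (\<bar>c i\<bar> * \<sigma> i)\<^sup>2)))"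
      by (rule sum_indep_normal[OF J(1) False indY]) (use DY J pos in \<open>auto simp: J_def intro: mult_pos_pos\<close>)
    moreover have "(\<Sum>i\<in>J. (c i)\<^sup>2 * (\<sigma> i)\<^sup>2) > 0"
    proof (rule sum_pos[OF J(1) False])
      fix i assume i: "i \<in> J"
      then have "0 < (c i)\<^sup>2" by (simp add: J_def)
      moreover have "0 < (\<sigma> i)\<^sup>2" using i J pos by force
      ultimately show "0 < (c i)\<^sup>2 * (\<sigma> i)\<^sup>2" by (rule mult_pos_pos)
    qed
    ultimately show ?thesis unfolding s1 s2
      by (simp add: normal_rv_def power_mult_distrib)
  qed
qed

lemma sum_pairs_split:
  fixes X :: "'n::{finite,linorder} \<Rightarrow> 'n \<Rightarrow> real"
  shows "(\<Sum>i\<in>UNIV. \<Sum>j\<in>UNIV. X i j) =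
    (\<Sum>p\<in>{(i,j). j \<le> i}. if fst p = snd p then X (fst p) (fst p) else X (fst p) (snd p) + X (snd p) (fst p))"
proof -
  define L where "L = {(i::'n,j). j \<le> i}"
  define U where "U = {(i::'n,j). i < j}"
  have "(\<Sum>i\<in>UNIV. \<Sum>j\<in>UNIV. X i j) = (\<Sum>p\<in>UNIV. X (fst p) (snd p))"
    by (simp add: sum.cartesian_product split_beta)
  also have "\<dots> = (\<Sum>p\<in>L. X (fst p) (snd p)) + (\<Sum>p\<in>U. X (fst p) (snd p))"
    by (subst sum.union_disjoint[symmetric]) (auto simp: L_def U_def intro!: sum.cong)
  also have "(\<Sum>p\<in>U. X (fst p) (snd p)) = (\<Sum>p\<in>L. if fst p = snd p then 0 else X (snd p) (fst p))"
  proof -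
    have "(\<Sum>p\<in>L. if fst p = snd p then 0 else X (snd p) (fst p)) = (\<Sum>p\<in>{p\<in>L. fst p \<noteq> snd p}. X (snd p) (fst p))"
      by (subst sum.inter_filter) (auto intro!: sum.cong)
    also have "\<dots> = (\<Sum>p\<in>U. X (fst p) (snd p))"
      by (rule sum.reindex_bij_witness[where i="\<lambda>(a,b). (b,a)" and j="\<lambda>(a,b). (b,a)"])
         (auto simp: L_def U_def)
    finally show ?thesis by simp
  qed
  also have "(\<Sum>p\<in>L. X (fst p) (snd p)) + (\<Sum>p\<in>L. if fst p = snd p then 0 else X (snd p) (fst p))
     = (\<Sum>p\<in>L. if fst p = snd p then X (fst p) (fst p) else X (fst p) (snd p) + X (snd p) (fst p))"
    by (subst sum.distrib[symmetric]) (auto intro!: sum.cong)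
  finally show ?thesis by (simp add: L_def)
qed

lemma GOE_proj:
  fixes A :: "'w \<Rightarrow> ((real, 'n::{finite,linorder}) vec, 'n) vec"
  assumes P: "prob_space M" and G: "is_GOE M A"
  shows "normal_rv M (\<lambda>\<omega>. a \<bullet> (A \<omega> *v v)) 0 (((norm a)\<^sup>2 * (norm v)\<^sup>2 + (a \<bullet> v)\<^sup>2) / real CARD('n))"
proof -
  define n where "n = real CARD('n)"
  have n: "0 < n" by (simp add: n_def)
  define L where "L = {(i::'n,j). j \<le> i}"
  define coef where "coef p = (if fst p = snd p then a $ fst p * v $ fst p else a $ fst p * v $ snd p + a $ snd p * v $ fst p)" for p :: "'n \<times> 'n"
  define \<sigma> where "\<sigma> p = (if fst p = snd p then sqrt (2 / n) else sqrt (1 / n))" for p :: "'n \<times> 'n"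
  define X where "X = (\<lambda>(i,j) \<omega>. A \<omega> $ i $ j)"
  from G have sym: "\<And>\<omega> i j. \<omega> \<in> space M \<Longrightarrow> A \<omega> $ i $ j = A \<omega> $ j $ i"
    and ind: "prob_space.indep_vars M (\<lambda>_. borel) X L"
    and dd: "\<And>i. distributed M lborel (\<lambda>\<omega>. A \<omega> $ i $ i) (normal_density 0 (sqrt (2 / n)))"
    and do: "\<And>i j. j < i \<Longrightarrow> distributed M lborel (\<lambda>\<omega>. A \<omega> $ i $ j) (normal_density 0 (sqrt (1 / n)))"
    by (auto simp: is_GOE_def X_def L_def n_def)
  have lc: "normal_rv M (\<lambda>\<omega>. \<Sum>p\<in>L. coef p * X p \<omega>) 0 (\<Sum>p\<in>L. (coef p)\<^sup>2 * (\<sigma> p)\<^sup>2)"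
  proof (rule indep_normal_lincomb[OF P _ ind])
    show "finite L" by simp
    show "distributed M lborel (X p) (normal_density 0 (\<sigma> p))" if "p \<in> L" for p
    proof -
      obtain i j where p: "p = (i, j)" by fastforce
      show ?thesis
      proof (cases "i = j")
        case True then show ?thesis using dd[of i] by (simp add: p X_def \<sigma>_def)
      next
        case False then have "j < i" using that p by (auto simp: L_def)
        then show ?thesis using do[of j i] False by (simp add: p X_def \<sigma>_def)
      qed
    qed
    show "0 < \<sigma> p" if "p \<in> L" for p using n by (simp add: \<sigma>_def)
  qed
  have eqZ: "a \<bullet> (A \<omega> *v v) = (\<Sum>p\<in>L. coef p * X p \<omega>)" if \<omega>: "\<omega> \<in> space M" for \<omega>
  proof -
    have "a \<bullet> (A \<omega> *v v) = (\<Sum>i\<in>UNIV. \<Sum>j\<in>UNIV. a $ i * A \<omega> $ i $ j * v $ j)"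
      by (simp add: inner_vec_def matrix_vector_mult_def sum_distrib_left mult.assoc)
    also have "\<dots> = (\<Sum>p\<in>L. coef p * X p \<omega>)"
      unfolding sum_pairs_split L_def[symmetric]
      by (rule sum.cong) (auto simp: coef_def X_def sym[OF \<omega>, of "snd _" "fst _"] algebra_simps)
    finally show ?thesis .
  qed
  have var: "(\<Sum>p\<in>L. (coef p)\<^sup>2 * (\<sigma> p)\<^sup>2) = ((norm a)\<^sup>2 * (norm v)\<^sup>2 + (a \<bullet> v)\<^sup>2) / n"
  proof -
    define Y where "Y i j = a $ i * v $ j * (a $ i * v $ j + a $ j * v $ i) / n" for i j
    have "(\<Sum>p\<in>L. (coef p)\<^sup>2 * (\<sigma> p)\<^sup>2) = (\<Sum>i\<in>UNIV. \<Sum>j\<in>UNIV. Y i j)"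
      unfolding sum_pairs_split L_def[symmetric]
      using n by (intro sum.cong) (auto simp: coef_def \<sigma>_def Y_def power2_eq_square field_simps)
    also have "\<dots> = ((\<Sum>i\<in>UNIV. \<Sum>j\<in>UNIV. (a $ i)\<^sup>2 * (v $ j)\<^sup>2) + (\<Sum>i\<in>UNIV. \<Sum>j\<in>UNIV. (a $ i * v $ i) * (a $ j * v $ j))) / n"
      by (simp add: Y_def sum_divide_distrib[symmetric] sum.distrib[symmetric] power2_eq_square algebra_simps)
    also have "(\<Sum>i\<in>UNIV. \<Sum>j\<in>UNIV. (a $ i)\<^sup>2 * (v $ j)\<^sup>2) = (norm a)\<^sup>2 * (norm v)\<^sup>2"
    proof -
      have na: "(norm x)\<^sup>2 = (\<Sum>i\<in>UNIV. (x $ i)\<^sup>2)" for x :: "(real, 'n) vec"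
        unfolding power2_norm_eq_inner inner_vec_def by (simp add: power2_eq_square)
      show ?thesis by (simp add: na sum_product)
    qed
    also have "(\<Sum>i\<in>UNIV. \<Sum>j\<in>UNIV. (a $ i * v $ i) * (a $ j * v $ j)) = (a \<bullet> v)\<^sup>2"
      by (simp add: inner_vec_def sum_product power2_eq_square)
    finally show ?thesis .
  qed
  show ?thesis
    using normal_rv_cong[OF lc, of "\<lambda>\<omega>. a \<bullet> (A \<omega> *v v)"] eqZ var by (simp add: n_def)
qed

lemma proj_moment:
  fixes \<rho> :: "(real, 'n::finite) vec measure"
  assumes P: "prob_space \<rho>" and S[measurable_cong]: "sets \<rho> = sets borel"
    and D: "distr \<rho> borel (\<lambda>z. a \<bullet> z) = nlaw v" and v: "0 \<le> v"
  shows "integrable \<rho> (\<lambda>z. (a \<bullet> z)\<^sup>2)" and "(\<integral>z. (a \<bullet> z)\<^sup>2 \<partial>\<rho>) = v"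
proof -
  have "integrable (distr \<rho> borel (\<lambda>z. a \<bullet> z)) (\<lambda>x. x\<^sup>2)"
    using nlaw_moment2[OF v] D by simp
  then show "integrable \<rho> (\<lambda>z. (a \<bullet> z)\<^sup>2)"
    by (subst (asm) integrable_distr_eq) auto
  have "(\<integral>x. x\<^sup>2 \<partial>distr \<rho> borel (\<lambda>z. a \<bullet> z)) = (\<integral>z. (a \<bullet> z)\<^sup>2 \<partial>\<rho>)"
    by (rule integral_distr) auto
  then show "(\<integral>z. (a \<bullet> z)\<^sup>2 \<partial>\<rho>) = v"
    using nlaw_moment2[OF v] D by simp
qed

lemma norm_sq_axis: "(norm z)\<^sup>2 = (\<Sum>i\<in>UNIV. (axis i 1 \<bullet> (z :: (real, 'n::finite) vec))\<^sup>2)"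
proof -
  have ax: "axis i 1 \<bullet> z = z $ i" for i by (simp add: inner_axis')
  show ?thesis unfolding power2_norm_eq_inner ax by (simp add: inner_vec_def power2_eq_square)
qed

lemma norm_moment:
  fixes \<rho> :: "(real, 'n::finite) vec measure"
  assumes P: "prob_space \<rho>" and S[measurable_cong]: "sets \<rho> = sets borel"
    and D: "\<And>a. distr \<rho> borel (\<lambda>z. a \<bullet> z) = nlaw (q a)" and v: "\<And>a. 0 \<le> q a"
  shows "integrable \<rho> (\<lambda>z. (norm z)\<^sup>2)" and "(\<integral>z. (norm z)\<^sup>2 \<partial>\<rho>) = (\<Sum>i\<in>UNIV. q (axis i 1))"
proof -
  have i: "integrable \<rho> (\<lambda>z. (axis i 1 \<bullet> z)\<^sup>2)" for i :: 'n
    by (rule proj_moment[OF P S D v])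
  show "integrable \<rho> (\<lambda>z. (norm z)\<^sup>2)"
    unfolding norm_sq_axis by (rule Bochner_Integration.integrable_sum) (rule i)
  show "(\<integral>z. (norm z)\<^sup>2 \<partial>\<rho>) = (\<Sum>i\<in>UNIV. q (axis i 1))"
    unfolding norm_sq_axis
    by (subst Bochner_Integration.integral_sum) (auto intro: i sum.cong proj_moment(2)[OF P S D v])
qed

lemma sum_axis_sq: "(\<Sum>i\<in>UNIV. (axis i 1 \<bullet> (u :: (real, 'n::finite) vec))\<^sup>2) = (norm u)\<^sup>2"
  by (simp add: norm_sq_axis)

lemma pointwise_bound:
  fixes x y u :: "'a::real_inner"
  assumes u: "norm u = 1" and l: "0 < l" and k: "0 < k"
  shows "(norm (x - y))\<^sup>2 \<ge> (norm x)\<^sup>2 + (norm y)\<^sup>2 - l * (u \<bullet> x)\<^sup>2 - (u \<bullet> y)\<^sup>2 / l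
           - k * ((norm x)\<^sup>2 - (u \<bullet> x)\<^sup>2) - ((norm y)\<^sup>2 - (u \<bullet> y)\<^sup>2) / k"
proof -
  define p where "p = u \<bullet> x"
  define q where "q = u \<bullet> y"
  define X where "X = x - p *\<^sub>R u"
  define Y where "Y = y - q *\<^sub>R u"
  have nn: "norm z * norm z = z \<bullet> z" for z :: 'a by (simp add: power2_norm_eq_inner[symmetric] power2_eq_square)
  have uu: "u \<bullet> u = 1" using u by (simp add: power2_norm_eq_inner[symmetric])
  have xy: "x \<bullet> y = X \<bullet> Y + p * q"
    by (simp add: X_def Y_def inner_diff_left inner_diff_right uu p_def q_def inner_commute algebra_simps)
  have nX: "X \<bullet> X = (norm x)\<^sup>2 - p\<^sup>2"
    by (simp add: X_def inner_diff_left inner_diff_right uu p_def inner_commute nn power2_eq_square algebra_simps)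
  have nY: "Y \<bullet> Y = (norm y)\<^sup>2 - q\<^sup>2"
    by (simp add: Y_def inner_diff_left inner_diff_right uu q_def inner_commute nn power2_eq_square algebra_simps)
  have nxy: "(norm (x - y))\<^sup>2 = (norm x)\<^sup>2 + (norm y)\<^sup>2 - 2 * (x \<bullet> y)"
    by (simp add: power2_norm_eq_inner inner_diff_left inner_diff_right inner_commute)
  have c1: "2 * (p * q) \<le> l * p\<^sup>2 + q\<^sup>2 / l"
  proof -
    have "0 \<le> (l * p - q)\<^sup>2" by simp
    then have "2 * l * (p * q) \<le> l * (l * p\<^sup>2) + q\<^sup>2" by (simp add: power2_eq_square algebra_simps)
    then show ?thesis using l by (simp add: field_simps power2_eq_square)
  qed
  have c2: "2 * (X \<bullet> Y) \<le> k * (X \<bullet> X) + (Y \<bullet> Y) / k"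
  proof -
    have "0 \<le> (k *\<^sub>R X - Y) \<bullet> (k *\<^sub>R X - Y)" by simp
    then have "2 * k * (X \<bullet> Y) \<le> k * (k * (X \<bullet> X)) + Y \<bullet> Y"
      by (simp add: inner_diff_left inner_diff_right inner_commute algebra_simps)
    then show ?thesis using k by (simp add: field_simps)
  qed
  show ?thesis
    using c1 c2 unfolding nxy xy nX nY p_def[symmetric] q_def[symmetric] by (simp add: algebra_simps)
qed

lemma coupling_fst:
  fixes \<mu> \<nu> :: "'a::euclidean_space measure" and g :: "'a \<Rightarrow> real"
  assumes \<pi>: "\<pi> \<in> couplings \<mu> \<nu>" and i: "integrable \<mu> g" and Sm: "sets \<mu> = sets borel"
  shows "has_bochner_integral \<pi> (\<lambda>p. g (fst p)) (\<integral>z. g z \<partial>\<mu>)"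
proof -
  from \<pi> have S[measurable_cong]: "sets \<pi> = sets (borel \<Otimes>\<^sub>M borel)" and D: "distr \<pi> borel fst = \<mu>"
    by (auto simp: couplings_def)
  have gm[measurable]: "g \<in> borel_measurable borel"
    using borel_measurable_integrable[OF i] unfolding measurable_cong_sets[OF Sm refl] .
  have fm: "fst \<in> \<pi> \<rightarrow>\<^sub>M borel" by measurable
  have "integrable \<pi> (\<lambda>p. g (fst p))"
    using i D integrable_distr_eq[OF fm gm] by simp
  moreover have "(\<integral>p. g (fst p) \<partial>\<pi>) = (\<integral>z. g z \<partial>\<mu>)"
    using integral_distr[OF fm gm] D by simp
  ultimately show ?thesis by (simp add: has_bochner_integral_iff)
qed

lemma coupling_snd:
  fixes \<mu> \<nu> :: "'a::euclidean_space measure" and g :: "'a \<Rightarrow> real"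
  assumes \<pi>: "\<pi> \<in> couplings \<mu> \<nu>" and i: "integrable \<nu> g" and Sm: "sets \<nu> = sets borel"
  shows "has_bochner_integral \<pi> (\<lambda>p. g (snd p)) (\<integral>z. g z \<partial>\<nu>)"
proof -
  from \<pi> have S[measurable_cong]: "sets \<pi> = sets (borel \<Otimes>\<^sub>M borel)" and D: "distr \<pi> borel snd = \<nu>"
    by (auto simp: couplings_def)
  have gm[measurable]: "g \<in> borel_measurable borel"
    using borel_measurable_integrable[OF i] unfolding measurable_cong_sets[OF Sm refl] .
  have fm: "snd \<in> \<pi> \<rightarrow>\<^sub>M borel" by measurable
  have "integrable \<pi> (\<lambda>p. g (snd p))"
    using i D integrable_distr_eq[OF fm gm] by simp
  moreover have "(\<integral>p. g (snd p) \<partial>\<pi>) = (\<integral>z. g z \<partial>\<nu>)"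
    using integral_distr[OF fm gm] D by simp
  ultimately show ?thesis by (simp add: has_bochner_integral_iff)
qed

lemma norm_diff_sq_le: "(norm (x - y))\<^sup>2 \<le> 2 * (norm x)\<^sup>2 + 2 * (norm (y::'a::real_normed_vector))\<^sup>2"
proof -
  have "norm (x - y) \<le> norm x + norm y" by (rule norm_triangle_ineq4)
  then have "(norm (x - y))\<^sup>2 \<le> (norm x + norm y)\<^sup>2" by (rule power_mono) simp
  also have "\<dots> \<le> 2 * (norm x)\<^sup>2 + 2 * (norm y)\<^sup>2"
  proof -
    have "0 \<le> (norm x - norm y)\<^sup>2" by simp
    then show ?thesis by (simp add: power2_eq_square algebra_simps)
  qed
  finally show ?thesis .
qed

lemma coupling_lower:
  fixes \<mu> \<nu> :: "(real, 'n::finite) vec measure"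
  assumes \<pi>: "\<pi> \<in> couplings \<mu> \<nu>" and Sm: "sets \<mu> = sets borel" and Sn: "sets \<nu> = sets borel"
    and u: "norm u = 1"
    and i1: "integrable \<mu> (\<lambda>z. (norm z)\<^sup>2)" and e1: "(\<integral>z. (norm z)\<^sup>2 \<partial>\<mu>) = mn"
    and i2: "integrable \<nu> (\<lambda>z. (norm z)\<^sup>2)" and e2: "(\<integral>z. (norm z)\<^sup>2 \<partial>\<nu>) = nn"
    and i3: "integrable \<mu> (\<lambda>z. (u \<bullet> z)\<^sup>2)" and e3: "(\<integral>z. (u \<bullet> z)\<^sup>2 \<partial>\<mu>) = mu"
    and i4: "integrable \<nu> (\<lambda>z. (u \<bullet> z)\<^sup>2)" and e4: "(\<integral>z. (u \<bullet> z)\<^sup>2 \<partial>\<nu>) = nu"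
  shows "(\<integral>\<^sup>+ p. ennreal ((norm (fst p - snd p))\<^sup>2) \<partial>\<pi>) = ennreal (\<integral>p. (norm (fst p - snd p))\<^sup>2 \<partial>\<pi>)"
    and "\<And>l k. 0 < l \<Longrightarrow> 0 < k \<Longrightarrow>
      mn + nn - l * mu - nu / l - k * (mn - mu) - (nn - nu) / k \<le> (\<integral>p. (norm (fst p - snd p))\<^sup>2 \<partial>\<pi>)"
proof -
  from \<pi> have S[measurable_cong]: "sets \<pi> = sets (borel \<Otimes>\<^sub>M borel)"
    by (auto simp: couplings_def)
  have h1: "has_bochner_integral \<pi> (\<lambda>p. (norm (fst p))\<^sup>2) mn"
    using coupling_fst[OF \<pi> i1 Sm] e1 by simp
  have h2: "has_bochner_integral \<pi> (\<lambda>p. (norm (snd p))\<^sup>2) nn"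
    using coupling_snd[OF \<pi> i2 Sn] e2 by simp
  have h3: "has_bochner_integral \<pi> (\<lambda>p. (u \<bullet> fst p)\<^sup>2) mu"
    using coupling_fst[OF \<pi> i3 Sm] e3 by simp
  have h4: "has_bochner_integral \<pi> (\<lambda>p. (u \<bullet> snd p)\<^sup>2) nu"
    using coupling_snd[OF \<pi> i4 Sn] e4 by simp
  have iD: "integrable \<pi> (\<lambda>p. (norm (fst p - snd p))\<^sup>2)"
  proof (rule Bochner_Integration.integrable_bound)
    show "integrable \<pi> (\<lambda>p. 2 * (norm (fst p))\<^sup>2 + 2 * (norm (snd p))\<^sup>2)"
    proof -
      have "has_bochner_integral \<pi> (\<lambda>p. 2 * (norm (fst p))\<^sup>2 + 2 * (norm (snd p))\<^sup>2) (2 * mn + 2 * nn)"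
        by (intro has_bochner_integral_add has_bochner_integral_mult_right h1 h2)
      then show ?thesis by (simp add: has_bochner_integral_iff)
    qed
    show "(\<lambda>p. (norm (fst p - snd p))\<^sup>2) \<in> borel_measurable \<pi>" by measurable
    show "AE p in \<pi>. norm ((norm (fst p - snd p))\<^sup>2) \<le> norm (2 * (norm (fst p))\<^sup>2 + 2 * (norm (snd p))\<^sup>2)"
      by (rule AE_I2) (simp add: norm_diff_sq_le)
  qed
  show "(\<integral>\<^sup>+ p. ennreal ((norm (fst p - snd p))\<^sup>2) \<partial>\<pi>) = ennreal (\<integral>p. (norm (fst p - snd p))\<^sup>2 \<partial>\<pi>)"
    by (rule nn_integral_eq_integral[OF iD]) simp
  fix l k :: real assume l: "0 < l" and k: "0 < k"
  define G where "G p = (norm (fst p))\<^sup>2 + (norm (snd p))\<^sup>2 - l * (u \<bullet> fst p)\<^sup>2 - (u \<bullet> snd p)\<^sup>2 / l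
           - k * ((norm (fst p))\<^sup>2 - (u \<bullet> fst p)\<^sup>2) - ((norm (snd p))\<^sup>2 - (u \<bullet> snd p)\<^sup>2) / k" for p :: "(real, 'n) vec \<times> (real, 'n) vec"
  have hG: "has_bochner_integral \<pi> G (mn + nn - l * mu - nu / l - k * (mn - mu) - (nn - nu) / k)"
    unfolding G_def
    by (intro has_bochner_integral_diff has_bochner_integral_add has_bochner_integral_mult_right
          has_bochner_integral_divide_zero h1 h2 h3 h4)
  have "(\<integral>p. G p \<partial>\<pi>) \<le> (\<integral>p. (norm (fst p - snd p))\<^sup>2 \<partial>\<pi>)"
  proof (rule integral_mono)
    show "integrable \<pi> G" using hG by (simp add: has_bochner_integral_iff)
    show "integrable \<pi> (\<lambda>p. (norm (fst p - snd p))\<^sup>2)" by (rule iD)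
    show "G p \<le> (norm (fst p - snd p))\<^sup>2" for p
      unfolding G_def by (rule pointwise_bound[OF u l k])
  qed
  then show "mn + nn - l * mu - nu / l - k * (mn - mu) - (nn - nu) / k \<le> (\<integral>p. (norm (fst p - snd p))\<^sup>2 \<partial>\<pi>)"
    using hG by (simp add: has_bochner_integral_iff)
qed

lemma integral_lborel_prod:
  fixes f :: "'a::euclidean_space \<Rightarrow> real \<Rightarrow> 'b::{real_normed_field,banach,second_countable_topology}"
  assumes "\<And>b. b \<in> Basis \<Longrightarrow> integrable lborel (f b)"
  shows "(\<integral>x. (\<Prod>b\<in>Basis. f b (x \<bullet> b)) \<partial>(lborel::'a measure)) = (\<Prod>b\<in>Basis. \<integral>x. f b x \<partial>lborel)"
proof -
  interpret product_sigma_finite "\<lambda>_::'a. lborel::real measure" by standard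
  have m: "\<And>b. b \<in> Basis \<Longrightarrow> f b \<in> borel_measurable borel"
    using assms by (metis borel_measurable_integrable sets_lborel measurable_cong_sets)
  have "(\<integral>x. (\<Prod>b\<in>Basis. f b (x \<bullet> b)) \<partial>(lborel::'a measure))
     = (\<integral>x. (\<Prod>b\<in>Basis. f b ((\<Sum>b'\<in>Basis. x b' *\<^sub>R b') \<bullet> b)) \<partial>(\<Pi>\<^sub>M b\<in>Basis. lborel))"
    apply (subst lborel_eq)
    apply (rule integral_distr)
     apply measurable
    using m by measurable
  also have "\<dots> = (\<integral>x. (\<Prod>b\<in>Basis. f b (x b)) \<partial>(\<Pi>\<^sub>M b\<in>Basis. lborel))"
    apply (rule Bochner_Integration.integral_cong[OF refl])
    apply (rule prod.cong[OF refl])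
    by (simp add: inner_sum_left inner_Basis if_distrib cong: if_cong)
  also have "\<dots> = (\<Prod>b\<in>Basis. \<integral>x. f b x \<partial>lborel)"
    by (rule product_integral_prod) (use assms in auto)
  finally show ?thesis .
qed

definition gk :: "'a::euclidean_space \<Rightarrow> real" where "gk z = exp (- (norm z)\<^sup>2 / 2)"
definition gd :: "'a::euclidean_space \<Rightarrow> real" where "gd g = (\<Prod>b\<in>Basis. std_normal_density (g \<bullet> b))"

lemma gk_prod: "gk z = (\<Prod>b\<in>Basis. exp (- (z \<bullet> b)\<^sup>2 / 2))"
proof -
  have "(norm z)\<^sup>2 = (\<Sum>b\<in>Basis. (z \<bullet> b)\<^sup>2)"
    unfolding power2_norm_eq_inner by (subst euclidean_inner) (simp add: power2_eq_square)
  then show ?thesis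
    by (simp add: gk_def exp_sum[symmetric] sum_divide_distrib[symmetric] sum_negf)
qed

lemma gk_pos: "0 < gk z" by (simp add: gk_def)
lemma gk_le1: "gk z \<le> 1" by (simp add: gk_def)
lemma gk_minus: "gk (- z) = gk z" by (simp add: gk_def)
lemma gk_measurable[measurable]: "gk \<in> borel_measurable borel" unfolding gk_def by measurable
lemma gd_measurable[measurable]: "gd \<in> borel_measurable borel" unfolding gd_def by measurable
lemma gd_nonneg: "0 \<le> gd g" by (simp add: gd_def prod_nonneg)

lemma char_std_normal': "(\<integral>x. complex_of_real (std_normal_density x) * iexp (t * x) \<partial>lborel) = complex_of_real (exp (- t\<^sup>2 / 2))"
proof -
  have "char std_normal_distribution t = complex_of_real (exp (- t\<^sup>2 / 2))"
    by (simp add: char_std_normal_distribution)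
  moreover have "char std_normal_distribution t = (\<integral>x. complex_of_real (std_normal_density x) * iexp (t * x) \<partial>lborel)"
    unfolding char_def
    by (subst integral_density) (auto simp: scaleR_conv_of_real)
  ultimately show ?thesis by simp
qed

lemma integrable_std_normal_iexp: "integrable lborel (\<lambda>x. complex_of_real (std_normal_density x) * iexp (t * x))"
  apply (rule Bochner_Integration.integrable_bound[where f="std_normal_density"])
    apply simp
   apply measurable
  apply (simp add: norm_mult)
  done

lemma gd_fourier_complex: "(\<integral>g. complex_of_real (gd g) * iexp (z \<bullet> g) \<partial>(lborel::'a::euclidean_space measure)) = complex_of_real (gk z)"
proof -
  have eq: "complex_of_real (gd g) * iexp (z \<bullet> g) = (\<Prod>b\<in>Basis. complex_of_real (std_normal_density (g \<bullet> b)) * iexp ((z \<bullet> b) * (g \<bullet> b)))" for g :: 'a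
  proof -
    have "iexp (z \<bullet> g) = (\<Prod>b\<in>Basis. iexp ((z \<bullet> b) * (g \<bullet> b)))"
      by (simp add: euclidean_inner[of z g] exp_sum[symmetric] sum_distrib_left)
    then show ?thesis by (simp add: gd_def prod.distrib)
  qed
  have "(\<integral>g. complex_of_real (gd g) * iexp (z \<bullet> g) \<partial>(lborel::'a measure))
      = (\<integral>g. (\<Prod>b\<in>Basis. complex_of_real (std_normal_density (g \<bullet> b)) * iexp ((z \<bullet> b) * (g \<bullet> b))) \<partial>(lborel::'a measure))"
    by (simp add: eq)
  also have "\<dots> = (\<Prod>b\<in>(Basis::'a set). \<integral>x. complex_of_real (std_normal_density x) * iexp ((z \<bullet> b) * x) \<partial>lborel)"
    by (rule integral_lborel_prod[where f="\<lambda>b x. complex_of_real (std_normal_density x) * iexp ((z \<bullet> b) * x)"])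
       (rule integrable_std_normal_iexp)
  also have "\<dots> = (\<Prod>b\<in>(Basis::'a set). complex_of_real (exp (- (z \<bullet> b)\<^sup>2 / 2)))"
    by (rule prod.cong[OF refl], rule char_std_normal')
  also have "\<dots> = complex_of_real (gk z)"
    by (simp add: gk_prod)
  finally show ?thesis .
qed

lemma nn_integral_std_normal: "(\<integral>\<^sup>+x. ennreal (std_normal_density x) \<partial>lborel) = 1"
  by (subst nn_integral_eq_integral) auto

lemma nn_integral_gd: "(\<integral>\<^sup>+g. ennreal (gd g) \<partial>(lborel::'a::euclidean_space measure)) = 1"
proof -
  have "(\<integral>\<^sup>+g. ennreal (gd g) \<partial>(lborel::'a measure)) = (\<integral>\<^sup>+g. (\<Prod>b\<in>Basis. ennreal (std_normal_density (g \<bullet> b))) \<partial>(lborel::'a measure))"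
    by (simp add: gd_def prod_ennreal)
  also have "\<dots> = (\<Prod>b\<in>(Basis::'a set). \<integral>\<^sup>+x. ennreal (std_normal_density x) \<partial>lborel)"
    by (rule nn_integral_lborel_prod) auto
  finally show ?thesis by (simp add: nn_integral_std_normal)
qed

lemma integrable_gd: "integrable lborel (gd :: 'a::euclidean_space \<Rightarrow> real)"
  unfolding integrable_iff_bounded using nn_integral_gd[where 'a='a] by (simp add: gd_nonneg)

lemma integral_gd: "(\<integral>g. gd g \<partial>(lborel::'a::euclidean_space measure)) = 1"
  using nn_integral_gd[where 'a='a] integrable_gd[where 'a='a]
  by (subst (asm) nn_integral_eq_integral) (auto simp: gd_nonneg)

lemma gd_fourier: "(\<integral>g. gd g * cos (z \<bullet> g) \<partial>(lborel::'a::euclidean_space measure)) = gk z"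
proof -
  have i: "integrable lborel (\<lambda>g::'a. complex_of_real (gd g) * iexp (z \<bullet> g))"
    apply (rule Bochner_Integration.integrable_bound[OF integrable_gd])
     apply measurable
    by (simp add: norm_mult gd_nonneg)
  have "Re (\<integral>g. complex_of_real (gd g) * iexp (z \<bullet> g) \<partial>(lborel::'a measure)) = (\<integral>g. Re (complex_of_real (gd g) * iexp (z \<bullet> g)) \<partial>(lborel::'a measure))"
    by (rule integral_bounded_linear[OF bounded_linear_Re i, symmetric])
  then show ?thesis
    by (simp add: gd_fourier_complex Re_exp)
qed

lemma integrable_pairI:
  fixes f :: "_ \<Rightarrow> _::{banach, second_countable_topology}"
  assumes "sigma_finite_measure M2" and f[measurable]: "f \<in> borel_measurable (M1 \<Otimes>\<^sub>M M2)"
    and fin: "(\<integral>\<^sup>+ x. \<integral>\<^sup>+ y. norm (f (x, y)) \<partial>M2 \<partial>M1) < \<infinity>"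
  shows "integrable (M1 \<Otimes>\<^sub>M M2) f"
proof -
  interpret M2: sigma_finite_measure M2 by fact
  have "(\<integral>\<^sup>+ x. \<integral>\<^sup>+ y. norm (f (x, y)) \<partial>M2 \<partial>M1) = (\<integral>\<^sup>+ z. norm (f z) \<partial>(M1 \<Otimes>\<^sub>M M2))"
    by (rule M2.nn_integral_fst) measurable
  with fin show ?thesis unfolding integrable_iff_bounded by simp
qed

lemma gauss_transform_eq:
  fixes \<mu> \<nu> :: "'a::euclidean_space measure"
  assumes P: "prob_space \<mu>" "prob_space \<nu>" and S: "sets \<mu> = sets borel" "sets \<nu> = sets borel"
    and D: "\<And>t. distr \<mu> borel (\<lambda>x. t \<bullet> x) = distr \<nu> borel (\<lambda>x. t \<bullet> x)"
  shows "(\<integral>x. gk (c *\<^sub>R (x - a)) \<partial>\<mu>) = (\<integral>x. gk (c *\<^sub>R (x - a)) \<partial>\<nu>)"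
proof -
  have key: "(\<integral>x. gk (c *\<^sub>R (x - a)) \<partial>\<mu>) =
     (\<integral>g. gd g * (\<integral>u. cos (c * u - c * (g \<bullet> a)) \<partial>distr \<mu> borel (\<lambda>x. g \<bullet> x)) \<partial>lborel)"
    if P: "prob_space \<mu>" and S[measurable_cong]: "sets \<mu> = sets borel" for \<mu> :: "'a measure"
  proof -
    interpret \<mu>: prob_space \<mu> by fact
    interpret PS: pair_sigma_finite lborel \<mu>
      by (simp add: pair_sigma_finite_def \<mu>.sigma_finite_measure_axioms lborel.sigma_finite_measure_axioms)
    have int: "integrable (lborel \<Otimes>\<^sub>M \<mu>) (\<lambda>(g, x). gd g * cos ((c *\<^sub>R (x - a)) \<bullet> g))"
    proof (rule integrable_pairI)
      show "sigma_finite_measure \<mu>" by (rule \<mu>.sigma_finite_measure_axioms)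
      show "(\<lambda>(g, x). gd g * cos ((c *\<^sub>R (x - a)) \<bullet> g)) \<in> borel_measurable (lborel \<Otimes>\<^sub>M \<mu>)"
        by measurable
      have "(\<integral>\<^sup>+ g. \<integral>\<^sup>+ x. ennreal (norm (gd g * cos ((c *\<^sub>R (x - a)) \<bullet> g))) \<partial>\<mu> \<partial>lborel)
          \<le> (\<integral>\<^sup>+ g. \<integral>\<^sup>+ x. ennreal (gd (g::'a)) \<partial>\<mu> \<partial>lborel)"
        by (intro nn_integral_mono ennreal_leI) (simp add: abs_mult gd_nonneg mult_right_le_one_le)
      also have "\<dots> = (\<integral>\<^sup>+ g. ennreal (gd (g::'a)) \<partial>lborel)"
        by (simp add: \<mu>.emeasure_space_1)
      also have "\<dots> < \<infinity>" by (simp add: nn_integral_gd)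
      finally show "(\<integral>\<^sup>+ g. \<integral>\<^sup>+ x. ennreal (norm (case (g, x) of (g, x) \<Rightarrow> gd g * cos ((c *\<^sub>R (x - a)) \<bullet> g))) \<partial>\<mu> \<partial>lborel) < \<infinity>"
        by simp
    qed
    have "(\<integral>x. gk (c *\<^sub>R (x - a)) \<partial>\<mu>) = (\<integral>x. (\<integral>g. gd g * cos ((c *\<^sub>R (x - a)) \<bullet> g) \<partial>lborel) \<partial>\<mu>)"
      using gd_fourier[of "c *\<^sub>R (x - a)" for x] by simp
    also have "\<dots> = (\<integral>g. (\<integral>x. gd g * cos ((c *\<^sub>R (x - a)) \<bullet> g) \<partial>\<mu>) \<partial>lborel)"
      by (rule PS.Fubini_integral[where f="\<lambda>g x. gd g * cos ((c *\<^sub>R (x - a)) \<bullet> g)"]) (use int in simp)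
    also have "\<dots> = (\<integral>g. gd g * (\<integral>u. cos (c * u - c * (g \<bullet> a)) \<partial>distr \<mu> borel (\<lambda>x. g \<bullet> x)) \<partial>lborel)"
    proof (rule Bochner_Integration.integral_cong[OF refl])
      fix g :: 'a
      have "(\<integral>x. gd g * cos ((c *\<^sub>R (x - a)) \<bullet> g) \<partial>\<mu>) = gd g * (\<integral>x. cos (c * (g \<bullet> x) - c * (g \<bullet> a)) \<partial>\<mu>)"
      proof -
        have "(c *\<^sub>R (x - a)) \<bullet> g = c * (g \<bullet> x) - c * (g \<bullet> a)" for x
          by (simp add: inner_diff_left right_diff_distrib inner_commute[of x g] inner_commute[of a g])
        then show ?thesis by simp
      qed
      also have "(\<integral>x. cos (c * (g \<bullet> x) - c * (g \<bullet> a)) \<partial>\<mu>) = (\<integral>u. cos (c * u - c * (g \<bullet> a)) \<partial>distr \<mu> borel (\<lambda>x. g \<bullet> x))"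
        by (rule integral_distr[symmetric]) measurable
      finally show "(\<integral>x. gd g * cos ((c *\<^sub>R (x - a)) \<bullet> g) \<partial>\<mu>) = gd g * (\<integral>u. cos (c * u - c * (g \<bullet> a)) \<partial>distr \<mu> borel (\<lambda>x. g \<bullet> x))" .
    qed
    finally show ?thesis .
  qed
  show ?thesis
    by (simp add: key[OF P(1) S(1)] key[OF P(2) S(2)] D)
qed

lemma gd_gk: "gd g = (1 / sqrt (2 * pi)) ^ DIM('a) * gk (g::'a::euclidean_space)"
proof -
  have "gd g = (\<Prod>b\<in>Basis. exp (- ((g \<bullet> b)\<^sup>2 / 2)) * (1 / sqrt (2 * pi)))"
    by (simp add: gd_def std_normal_density_def mult.commute)
  also have "\<dots> = (\<Prod>b\<in>Basis. exp (- ((g \<bullet> b)\<^sup>2 / 2))) * (1 / sqrt (2 * pi)) ^ DIM('a)"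
    unfolding prod.distrib prod_constant by simp
  finally show ?thesis by (simp add: gk_prod mult.commute)
qed

lemma gk_gd: "gk g = sqrt (2 * pi) ^ DIM('a) * gd (g::'a::euclidean_space)"
  by (simp add: gd_gk power_one_over)

lemma lborel_affine_eq:
  fixes x :: "'a::euclidean_space"
  assumes "0 < \<sigma>"
  shows "(lborel::'a measure) = density (distr lborel borel (\<lambda>b. x + \<sigma> *\<^sub>R b)) (\<lambda>_. ennreal (\<sigma> ^ DIM('a)))"
  using lborel_affine[of \<sigma> x] assms by simp

lemma nn_integral_lborel_affine:
  fixes x :: "'a::euclidean_space"
  assumes "0 < \<sigma>" and [measurable]: "h \<in> borel_measurable borel"
  shows "(\<integral>\<^sup>+a. h a \<partial>lborel) = ennreal (\<sigma> ^ DIM('a)) * (\<integral>\<^sup>+b. h (x + \<sigma> *\<^sub>R b) \<partial>lborel)"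
proof -
  have "(\<integral>\<^sup>+a. h a \<partial>lborel) = (\<integral>\<^sup>+a. h a \<partial>density (distr lborel borel (\<lambda>b. x + \<sigma> *\<^sub>R b)) (\<lambda>_. ennreal (\<sigma> ^ DIM('a))))"
    by (subst (1) lborel_affine_eq[OF assms(1), of x]) (rule refl)
  also have "\<dots> = ennreal (\<sigma> ^ DIM('a)) * (\<integral>\<^sup>+b. h (x + \<sigma> *\<^sub>R b) \<partial>lborel)"
    by (simp add: nn_integral_density nn_integral_distr nn_integral_cmult)
  finally show ?thesis .
qed

lemma integral_lborel_affine:
  fixes x :: "'a::euclidean_space" and h :: "'a \<Rightarrow> real"
  assumes "0 < \<sigma>" and [measurable]: "h \<in> borel_measurable borel"
  shows "(\<integral>a. h a \<partial>lborel) = \<sigma> ^ DIM('a) * (\<integral>b. h (x + \<sigma> *\<^sub>R b) \<partial>lborel)"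
proof -
  have "(\<integral>a. h a \<partial>lborel) = (\<integral>a. h a \<partial>density (distr lborel borel (\<lambda>b. x + \<sigma> *\<^sub>R b)) (\<lambda>_. ennreal (\<sigma> ^ DIM('a))))"
    by (subst (1) lborel_affine_eq[OF assms(1), of x]) (rule refl)
  also have "\<dots> = (\<integral>a. \<sigma> ^ DIM('a) * h a \<partial>distr lborel borel (\<lambda>b. x + \<sigma> *\<^sub>R b))"
    by (subst integral_density) (use assms in auto)
  also have "\<dots> = (\<integral>b. \<sigma> ^ DIM('a) * h (x + \<sigma> *\<^sub>R b) \<partial>lborel)"
    by (rule integral_distr) measurable
  finally show ?thesis by simp
qed

lemma nn_integral_gk: "(\<integral>\<^sup>+g. ennreal (gk g) \<partial>(lborel::'a::euclidean_space measure)) = ennreal (sqrt (2 * pi) ^ DIM('a))"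
proof -
  have "(\<integral>\<^sup>+g. ennreal (gk g) \<partial>(lborel::'a measure)) = (\<integral>\<^sup>+g. ennreal (sqrt (2 * pi) ^ DIM('a)) * ennreal (gd g) \<partial>(lborel::'a measure))"
    by (simp add: gk_gd ennreal_mult gd_nonneg)
  also have "\<dots> = ennreal (sqrt (2 * pi) ^ DIM('a))"
    by (simp add: nn_integral_cmult nn_integral_gd)
  finally show ?thesis .
qed

lemma CW_integral_eq:
  fixes \<mu> \<nu> :: "'a::euclidean_space measure" and f :: "'a \<Rightarrow> real"
  assumes P: "prob_space \<mu>" "prob_space \<nu>" and S: "sets \<mu> = sets borel" "sets \<nu> = sets borel"
    and D: "\<And>t. distr \<mu> borel (\<lambda>x. t \<bullet> x) = distr \<nu> borel (\<lambda>x. t \<bullet> x)"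
    and cont: "continuous_on UNIV f" and bnd: "\<And>x. \<bar>f x\<bar> \<le> B"
  shows "(\<integral>x. f x \<partial>\<mu>) = (\<integral>x. f x \<partial>\<nu>)"
proof -
  have fm[measurable]: "f \<in> borel_measurable borel" by (rule borel_measurable_continuous_onI[OF cont])
  define K where "K = sqrt (2 * pi) ^ DIM('a)"
  have K: "0 < K" by (simp add: K_def)
  define \<psi> where "\<psi> \<sigma> x = (\<integral>b. f (x + \<sigma> *\<^sub>R b) * gd b \<partial>lborel)" for \<sigma> :: real and x :: 'a
  have \<psi>m[measurable]: "\<psi> \<sigma> \<in> borel_measurable borel" for \<sigma>
    unfolding \<psi>_def by measurable
  have \<psi>b: "\<bar>\<psi> \<sigma> x\<bar> \<le> B" for \<sigma> x
  proof -
    have "\<bar>\<psi> \<sigma> x\<bar> \<le> (\<integral>b. \<bar>f (x + \<sigma> *\<^sub>R b) * gd b\<bar> \<partial>lborel)"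
      unfolding \<psi>_def by (rule integral_abs_bound)
    also have "\<dots> \<le> (\<integral>b. B * gd (b::'a) \<partial>lborel)"
    proof (rule integral_mono)
      show i: "integrable lborel (\<lambda>b. B * gd b)" by (simp add: integrable_gd)
      show "\<bar>f (x + \<sigma> *\<^sub>R b) * gd b\<bar> \<le> B * gd b" for b
        by (simp add: abs_mult gd_nonneg mult_right_mono bnd)
      show "integrable lborel (\<lambda>b. \<bar>f (x + \<sigma> *\<^sub>R b) * gd b\<bar>)"
        apply (rule Bochner_Integration.integrable_bound[OF i])
         apply measurable
        apply (rule AE_I2)
        apply (simp add: abs_mult gd_nonneg)
        by (rule mult_right_mono[OF order_trans[OF bnd abs_ge_self] gd_nonneg])
    qed
    also have "\<dots> = B" by (simp add: integral_gd)
    finally show ?thesis .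
  qed
  have key: "(\<integral>a. f a * (\<integral>x. gk ((1/\<sigma>) *\<^sub>R (x - a)) \<partial>\<mu>) \<partial>lborel) = \<sigma> ^ DIM('a) * K * (\<integral>x. \<psi> \<sigma> x \<partial>\<mu>)"
    if \<sigma>: "0 < \<sigma>" and P: "prob_space \<mu>" and S[measurable_cong]: "sets \<mu> = sets borel" for \<sigma> and \<mu> :: "'a measure"
  proof -
    interpret \<mu>: prob_space \<mu> by fact
    interpret PS: pair_sigma_finite \<mu> lborel
      by (simp add: pair_sigma_finite_def \<mu>.sigma_finite_measure_axioms lborel.sigma_finite_measure_axioms)
    have inner: "(\<integral>a. f a * gk ((1/\<sigma>) *\<^sub>R (x - a)) \<partial>lborel) = \<sigma> ^ DIM('a) * K * \<psi> \<sigma> x" for x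
    proof -
      have "(\<integral>a. f a * gk ((1/\<sigma>) *\<^sub>R (x - a)) \<partial>lborel) = \<sigma> ^ DIM('a) * (\<integral>b. f (x + \<sigma> *\<^sub>R b) * gk ((1/\<sigma>) *\<^sub>R (x - (x + \<sigma> *\<^sub>R b))) \<partial>lborel)"
        by (rule integral_lborel_affine[OF \<sigma>]) measurable
      also have "(\<lambda>b. f (x + \<sigma> *\<^sub>R b) * gk ((1/\<sigma>) *\<^sub>R (x - (x + \<sigma> *\<^sub>R b)))) = (\<lambda>b. K * (f (x + \<sigma> *\<^sub>R b) * gd b))"
      proof -
        have "gk ((1/\<sigma>) *\<^sub>R (x - (x + \<sigma> *\<^sub>R b))) = gk b" for b
          using \<sigma> by (simp add: gk_def)
        then have "(\<lambda>b. f (x + \<sigma> *\<^sub>R b) * gk ((1/\<sigma>) *\<^sub>R (x - (x + \<sigma> *\<^sub>R b)))) = (\<lambda>b. f (x + \<sigma> *\<^sub>R b) * gk b)"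
          by simp
        then show ?thesis by (simp add: gk_gd K_def mult_ac)
      qed
      finally show ?thesis by (simp add: \<psi>_def)
    qed
    have int: "integrable (\<mu> \<Otimes>\<^sub>M lborel) (\<lambda>(x, a). f a * gk ((1/\<sigma>) *\<^sub>R (x - a)))"
    proof (rule integrable_pairI)
      show "sigma_finite_measure lborel" by (rule lborel.sigma_finite_measure_axioms)
      show "(\<lambda>(x, a). f a * gk ((1/\<sigma>) *\<^sub>R (x - a))) \<in> borel_measurable (\<mu> \<Otimes>\<^sub>M lborel)"
        by measurable
      have "(\<integral>\<^sup>+ x. \<integral>\<^sup>+ a. ennreal (norm (f a * gk ((1/\<sigma>) *\<^sub>R (x - a)))) \<partial>lborel \<partial>\<mu>)
          \<le> (\<integral>\<^sup>+ x. \<integral>\<^sup>+ a. ennreal B * ennreal (gk ((1/\<sigma>) *\<^sub>R (x - a))) \<partial>lborel \<partial>\<mu>)"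
        apply (intro nn_integral_mono)
        apply (subst ennreal_mult'[symmetric])
        using bnd[of 0] apply simp
        apply (rule ennreal_leI)
        by (simp add: abs_mult gk_pos less_imp_le mult_right_mono bnd)
      also have "\<dots> = (\<integral>\<^sup>+ x. ennreal B * (ennreal (\<sigma> ^ DIM('a)) * ennreal K) \<partial>\<mu>)"
      proof (rule nn_integral_cong)
        fix x :: 'a
        have "(\<integral>\<^sup>+ a. ennreal (gk ((1/\<sigma>) *\<^sub>R (x - a))) \<partial>lborel) = ennreal (\<sigma> ^ DIM('a)) * (\<integral>\<^sup>+ b. ennreal (gk ((1/\<sigma>) *\<^sub>R (x - (x + \<sigma> *\<^sub>R b)))) \<partial>lborel)"
          by (rule nn_integral_lborel_affine[OF \<sigma>, where h="\<lambda>a. ennreal (gk ((1/\<sigma>) *\<^sub>R (x - a)))"]) measurable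
        also have "(\<lambda>b. ennreal (gk ((1/\<sigma>) *\<^sub>R (x - (x + \<sigma> *\<^sub>R b))))) = (\<lambda>b. ennreal (gk b))"
          using \<sigma> by (simp add: gk_minus)
        finally show "(\<integral>\<^sup>+ a. ennreal B * ennreal (gk ((1/\<sigma>) *\<^sub>R (x - a))) \<partial>lborel) = ennreal B * (ennreal (\<sigma> ^ DIM('a)) * ennreal K)"
          by (simp add: nn_integral_cmult nn_integral_gk K_def)
      qed
      also have "\<dots> < \<infinity>"
        by (simp add: \<mu>.emeasure_space_1 ennreal_mult_less_top)
      finally show "(\<integral>\<^sup>+ x. \<integral>\<^sup>+ a. ennreal (norm (case (x, a) of (x, a) \<Rightarrow> f a * gk ((1/\<sigma>) *\<^sub>R (x - a)))) \<partial>lborel \<partial>\<mu>) < \<infinity>"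
        by simp
    qed
    have "(\<integral>a. f a * (\<integral>x. gk ((1/\<sigma>) *\<^sub>R (x - a)) \<partial>\<mu>) \<partial>lborel) = (\<integral>a. (\<integral>x. f a * gk ((1/\<sigma>) *\<^sub>R (x - a)) \<partial>\<mu>) \<partial>lborel)"
      by simp
    also have "\<dots> = (\<integral>x. (\<integral>a. f a * gk ((1/\<sigma>) *\<^sub>R (x - a)) \<partial>lborel) \<partial>\<mu>)"
      by (rule PS.Fubini_integral[where f="\<lambda>x a. f a * gk ((1/\<sigma>) *\<^sub>R (x - a))"]) (use int in simp)
    also have "\<dots> = (\<integral>x. \<sigma> ^ DIM('a) * K * \<psi> \<sigma> x \<partial>\<mu>)"
      by (simp add: inner)
    finally show ?thesis by simp
  qed
  have eqpsi: "(\<integral>x. \<psi> \<sigma> x \<partial>\<mu>) = (\<integral>x. \<psi> \<sigma> x \<partial>\<nu>)" if \<sigma>: "0 < \<sigma>" for \<sigma>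
  proof -
    have "(\<integral>a. f a * (\<integral>x. gk ((1/\<sigma>) *\<^sub>R (x - a)) \<partial>\<mu>) \<partial>lborel) = (\<integral>a. f a * (\<integral>x. gk ((1/\<sigma>) *\<^sub>R (x - a)) \<partial>\<nu>) \<partial>lborel)"
      using gauss_transform_eq[OF P S D] by simp
    then have "\<sigma> ^ DIM('a) * K * (\<integral>x. \<psi> \<sigma> x \<partial>\<mu>) = \<sigma> ^ DIM('a) * K * (\<integral>x. \<psi> \<sigma> x \<partial>\<nu>)"
      by (simp add: key[OF \<sigma> P(1) S(1)] key[OF \<sigma> P(2) S(2)])
    then show ?thesis using \<sigma> K by simp
  qed
  have lim\<psi>: "(\<lambda>m. \<psi> (1 / Suc m) x) \<longlonglongrightarrow> f x" for x
  proof -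
    have "(\<lambda>m. \<integral>b. f (x + (1 / Suc m) *\<^sub>R b) * gd b \<partial>lborel) \<longlonglongrightarrow> (\<integral>b. f x * gd (b::'a) \<partial>lborel)"
    proof (rule integral_dominated_convergence[where w="\<lambda>b. B * gd b"])
      show "(\<lambda>b. f x * gd b) \<in> borel_measurable lborel" by measurable
      show "(\<lambda>b. f (x + (1 / Suc m) *\<^sub>R b) * gd b) \<in> borel_measurable lborel" for m by measurable
      show "integrable lborel (\<lambda>b. B * gd b)" by (simp add: integrable_gd)
      show "AE b in lborel. (\<lambda>m. f (x + (1 / Suc m) *\<^sub>R b) * gd b) \<longlonglongrightarrow> f x * gd b"
      proof (rule AE_I2)
        fix b
        have z: "(\<lambda>m. 1 / real (Suc m)) \<longlonglongrightarrow> 0"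
          by (rule LIMSEQ_Suc[OF lim_const_over_n])
        have "(\<lambda>m. x + (1 / real (Suc m)) *\<^sub>R b) \<longlonglongrightarrow> x + 0 *\<^sub>R b"
          by (intro tendsto_intros z)
        then have t: "(\<lambda>m. x + (1 / real (Suc m)) *\<^sub>R b) \<longlonglongrightarrow> x" by simp
        have "isCont f x" using cont continuous_on_eq_continuous_at open_UNIV by blast
        from isCont_tendsto_compose[OF this t]
        show "(\<lambda>m. f (x + (1 / Suc m) *\<^sub>R b) * gd b) \<longlonglongrightarrow> f x * gd b"
          by (intro tendsto_intros)
      qed
      show "AE b in lborel. norm (f (x + (1 / Suc m) *\<^sub>R b) * gd b) \<le> B * gd b" for m
        by (simp add: abs_mult gd_nonneg mult_right_mono bnd)
    qed
    then show ?thesis by (simp add: \<psi>_def integral_gd)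
  qed
  have limint: "(\<lambda>m. \<integral>x. \<psi> (1 / Suc m) x \<partial>\<mu>) \<longlonglongrightarrow> (\<integral>x. f x \<partial>\<mu>)"
    if P: "prob_space \<mu>" and S[measurable_cong]: "sets \<mu> = sets borel" for \<mu> :: "'a measure"
  proof (rule integral_dominated_convergence[where w="\<lambda>_. B"])
    interpret \<mu>: prob_space \<mu> by fact
    show "f \<in> borel_measurable \<mu>" by measurable
    show "\<psi> (1 / Suc m) \<in> borel_measurable \<mu>" for m by measurable
    show "integrable \<mu> (\<lambda>_. B)" by simp
    show "AE x in \<mu>. (\<lambda>m. \<psi> (1 / Suc m) x) \<longlonglongrightarrow> f x" by (rule AE_I2) (rule lim\<psi>)
    show "AE x in \<mu>. norm (\<psi> (1 / Suc m) x) \<le> B" for m by (simp add: \<psi>b)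
  qed
  have "(\<lambda>m. \<integral>x. \<psi> (1 / Suc m) x \<partial>\<mu>) = (\<lambda>m. \<integral>x. \<psi> (1 / Suc m) x \<partial>\<nu>)"
    by (intro ext eqpsi) simp
  then show ?thesis
    using limint[OF P(1) S(1)] limint[OF P(2) S(2)] LIMSEQ_unique by metis
qed

lemma tendsto_min1_infdist:
  fixes C :: "'a::metric_space set"
  assumes "closed C" "C \<noteq> {}"
  shows "(\<lambda>m. min 1 (real m * infdist x C)) \<longlonglongrightarrow> indicator (- C) x"
proof (cases "x \<in> C")
  case True
  then have "infdist x C = 0" using assms in_closed_iff_infdist_zero by blast
  then show ?thesis using True by simp
next
  case False
  then have d: "infdist x C > 0" using assms infdist_pos_not_in_closed by blast
  obtain N :: nat where N: "1 / infdist x C < N" using reals_Archimedean2 by blast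
  have "eventually (\<lambda>m. min 1 (real m * infdist x C) = 1) sequentially"
    unfolding eventually_sequentially
  proof (intro exI allI impI)
    fix m assume "N \<le> m"
    then have "1 / infdist x C < m" using N by linarith
    then have "1 < m * infdist x C" using d by (simp add: field_simps)
    then show "min 1 (real m * infdist x C) = 1" by simp
  qed
  then have "(\<lambda>m. min 1 (real m * infdist x C)) \<longlonglongrightarrow> 1"
    by (rule tendsto_eventually)
  then show ?thesis using False by simp
qed

theorem cramer_wold:
  fixes \<mu> \<nu> :: "'a::euclidean_space measure"
  assumes P: "prob_space \<mu>" "prob_space \<nu>" and S: "sets \<mu> = sets borel" "sets \<nu> = sets borel"
    and D: "\<And>t. distr \<mu> borel (\<lambda>x. t \<bullet> x) = distr \<nu> borel (\<lambda>x. t \<bullet> x)"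
  shows "\<mu> = \<nu>"
proof -
  interpret \<mu>: prob_space \<mu> by fact
  interpret \<nu>: prob_space \<nu> by fact
  have sp: "space \<mu> = UNIV" "space \<nu> = UNIV"
    using sets_eq_imp_space_eq[OF S(1)] sets_eq_imp_space_eq[OF S(2)] by auto
  have opn: "emeasure \<mu> U = emeasure \<nu> U" if U: "open U" for U :: "'a set"
  proof (cases "U = UNIV")
    case True
    then show ?thesis using \<mu>.emeasure_space_1 \<nu>.emeasure_space_1 sp by simp
  next
    case False
    define C where "C = - U"
    have C: "closed C" "C \<noteq> {}" using U False by (auto simp: C_def)
    define fm where "fm m x = min 1 (real m * infdist x C)" for m :: nat and x :: 'a
    have cont: "continuous_on UNIV (fm m)" for m
      unfolding fm_def by (intro continuous_intros)
    have bnd: "\<bar>fm m x\<bar> \<le> 1" for m x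
      unfolding fm_def using infdist_nonneg[of x C] by auto
    have eq: "(\<integral>x. fm m x \<partial>\<mu>) = (\<integral>x. fm m x \<partial>\<nu>)" for m
      by (rule CW_integral_eq[OF P S D cont bnd])
    have lim: "(\<lambda>m. \<integral>x. fm m x \<partial>M) \<longlonglongrightarrow> (\<integral>x. indicator U x \<partial>M)"
      if "prob_space M" and SM[measurable_cong]: "sets M = sets borel" for M :: "'a measure"
    proof (rule integral_dominated_convergence[where w="\<lambda>_. 1"])
      interpret M: prob_space M by fact
      have Ub[measurable]: "U \<in> sets borel" using U by simp
      show "(indicator U :: 'a \<Rightarrow> real) \<in> borel_measurable M" by measurable
      show "fm m \<in> borel_measurable M" for m
        using borel_measurable_continuous_onI[OF cont] by (simp add: measurable_cong_sets[OF SM refl])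
      show "integrable M (\<lambda>_. 1::real)" by simp
      show "AE x in M. (\<lambda>m. fm m x) \<longlonglongrightarrow> indicator U x"
        using tendsto_min1_infdist[OF C] by (simp add: fm_def C_def)
      show "AE x in M. norm (fm m x) \<le> 1" for m using bnd by simp
    qed
    have "measure \<mu> U = measure \<nu> U"
      using LIMSEQ_unique[OF lim[OF P(1) S(1)]] lim[OF P(2) S(2)] eq U
      by (simp add: S)
    then show ?thesis
      by (simp add: \<mu>.emeasure_eq_measure \<nu>.emeasure_eq_measure)
  qed
  show ?thesis
  proof (rule measure_eqI_generator_eq[where E="{U. open U}" and \<Omega>=UNIV and A="\<lambda>_. UNIV"])
    show "Int_stable {U :: 'a set. open U}" by (auto simp: Int_stable_def)
    show "{U :: 'a set. open U} \<subseteq> Pow UNIV" by auto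
    show "\<And>X. X \<in> {U. open U} \<Longrightarrow> emeasure \<mu> X = emeasure \<nu> X" using opn by auto
    show "sets \<mu> = sigma_sets UNIV {U. open U}" by (simp add: S sets_borel)
    show "sets \<nu> = sigma_sets UNIV {U. open U}" by (simp add: S sets_borel)
    show "range (\<lambda>_. UNIV) \<subseteq> {U :: 'a set. open U}" by auto
    show "\<Union> (range (\<lambda>_::nat. UNIV)) = (UNIV :: 'a set)" by auto
    show "emeasure \<mu> UNIV \<noteq> \<infinity>" for i :: nat using \<mu>.emeasure_space_1 sp by simp
  qed
qed

lemma lim_lower_mult:
  fixes E c d :: real
  assumes "\<And>t. 0 < t \<Longrightarrow> c - d * t \<le> E"
  shows "c \<le> E"
proof (rule ccontr)
  assume "\<not> c \<le> E"
  then have ce: "0 < c - E" by simp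
  show False
  proof (cases "d \<le> 0")
    case True
    then show False using assms[of 1] ce by simp
  next
    case False
    define t where "t = (c - E) / (2 * d)"
    have t: "0 < t" using ce False by (simp add: t_def)
    have "d * t = (c - E) / 2" using False by (simp add: t_def field_simps)
    then show False using assms[OF t] ce by simp
  qed
qed

lemma lim_lower_div:
  fixes E c d :: real
  assumes "\<And>t. 0 < t \<Longrightarrow> c - d / t \<le> E"
  shows "c \<le> E"
proof (rule lim_lower_mult)
  fix t :: real assume "0 < t"
  then show "c - d * t \<le> E" using assms[of "1 / t"] by simp
qed

lemma final_real:
  fixes E n \<alpha> \<beta> :: real
  assumes n: "1 \<le> n" and a: "0 \<le> \<alpha>" and b: "0 \<le> \<beta>"
    and H: "\<And>l k. 0 < l \<Longrightarrow> 0 < k \<Longrightarrow>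
      (n + 1) * \<alpha>\<^sup>2 + n * \<beta>\<^sup>2 - l * (2 * \<alpha>\<^sup>2) - \<beta>\<^sup>2 / l - k * ((n + 1) * \<alpha>\<^sup>2 - 2 * \<alpha>\<^sup>2) - (n * \<beta>\<^sup>2 - \<beta>\<^sup>2) / k \<le> E"
  shows "(sqrt 2 * \<alpha> - \<beta>)\<^sup>2 + (n - 1) * (\<alpha> - \<beta>)\<^sup>2 \<le> E"
proof -
  define s where "s = sqrt 2"
  have s: "0 < s" "s * s = 2" by (simp_all add: s_def)
  consider "\<alpha> = 0" | "\<beta> = 0" "0 < \<alpha>" | "0 < \<alpha>" "0 < \<beta>" using a b by linarith
  then show ?thesis
  proof cases
    case 1
    have "n * \<beta>\<^sup>2 - (n * \<beta>\<^sup>2) / t \<le> E" if "0 < t" for t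
    proof -
      have eq: "\<beta>\<^sup>2 / t + (n * \<beta>\<^sup>2 - \<beta>\<^sup>2) / t = n * \<beta>\<^sup>2 / t" by (simp add: diff_divide_distrib)
      show ?thesis using H[OF that that] 1 eq by simp
    qed
    then have "n * \<beta>\<^sup>2 \<le> E" by (rule lim_lower_div)
    then show ?thesis using 1 by (simp add: algebra_simps)
  next
    case 2
    have "(n + 1) * \<alpha>\<^sup>2 - ((n + 1) * \<alpha>\<^sup>2) * t \<le> E" if "0 < t" for t
      using H[OF that that] 2 by (simp add: algebra_simps)
    then have "(n + 1) * \<alpha>\<^sup>2 \<le> E" by (rule lim_lower_mult)
    then show ?thesis using 2 s by (simp add: power2_eq_square algebra_simps s_def[symmetric])
  next
    case 3
    define l where "l = \<beta> / (s * \<alpha>)"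
    define k where "k = \<beta> / \<alpha>"
    have l: "0 < l" and k: "0 < k" using 3 s by (simp_all add: l_def k_def)
    have e1: "l * (2 * \<alpha>\<^sup>2) = s * \<alpha> * \<beta>" using 3 s by (simp add: l_def power2_eq_square field_simps)
    have e2: "\<beta>\<^sup>2 / l = s * \<alpha> * \<beta>" using 3 s by (simp add: l_def power2_eq_square field_simps)
    have e3: "k * ((n + 1) * \<alpha>\<^sup>2 - 2 * \<alpha>\<^sup>2) = (n - 1) * \<alpha> * \<beta>" using 3 by (simp add: k_def power2_eq_square field_simps)
    have e4: "(n * \<beta>\<^sup>2 - \<beta>\<^sup>2) / k = (n - 1) * \<alpha> * \<beta>" using 3 by (simp add: k_def power2_eq_square field_simps)
    have "(n + 1) * \<alpha>\<^sup>2 + n * \<beta>\<^sup>2 - s * \<alpha> * \<beta> - s * \<alpha> * \<beta> - (n - 1) * \<alpha> * \<beta> - (n - 1) * \<alpha> * \<beta> \<le> E"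
      using H[OF l k] unfolding e1 e2 e3 e4 .
    moreover have "(sqrt 2 * \<alpha> - \<beta>)\<^sup>2 + (n - 1) * (\<alpha> - \<beta>)\<^sup>2 = (n + 1) * \<alpha>\<^sup>2 + n * \<beta>\<^sup>2 - s * \<alpha> * \<beta> - s * \<alpha> * \<beta> - (n - 1) * \<alpha> * \<beta> - (n - 1) * \<alpha> * \<beta>"
      using s unfolding s_def[symmetric] by (simp add: power2_eq_square algebra_simps)
    ultimately show ?thesis by simp
  qed
qed

lemma alg_I2:
  fixes h r p na :: real
  assumes "2 * h * h = 1"
  shows "r * r * (na - 2 * (1 - h) * p * p + (1 - h) * (1 - h) * p * p) + (r * (p - (1 - h) * p)) * (r * (p - (1 - h) * p)) = r * r * na"
  using assms by algebra

lemma alg_I4: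
  fixes h r a n :: real
  assumes "2 * h * h = 1"
  shows "(1 - r) * (1 - r) * ((n + 1) * (a * a)) + (2 * (1 - r) * r * (1 - h) + r * r * ((1 - h) * (1 - h))) * (2 * (a * a))
    = (2 * h * a - r * a) * (2 * h * a - r * a) + (n - 1) * ((a - r * a) * (a - r * a))"
  using assms by algebra


lemma sqrt2_h: "2 * (sqrt 2 / 2) * (sqrt 2 / 2) = (1::real)"
  by (simp add: power2_eq_square[symmetric])

lemma upper_pos:
  fixes \<mu> \<nu> :: "(real, 'n::finite) vec measure"
  assumes P\<mu>: "prob_space \<mu>" and P\<nu>: "prob_space \<nu>" and S\<mu>[measurable_cong]: "sets \<mu> = sets borel" and S\<nu>: "sets \<nu> = sets borel"
    and u: "norm u = 1" and a0: "0 < \<alpha>" and b0: "0 \<le> \<beta>"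
    and PX: "\<And>a. distr \<mu> borel (\<lambda>z. a \<bullet> z) = nlaw (\<alpha>\<^sup>2 * ((norm a)\<^sup>2 + (u \<bullet> a)\<^sup>2))"
    and PY: "\<And>a. distr \<nu> borel (\<lambda>z. a \<bullet> z) = nlaw (\<beta>\<^sup>2 * (norm a)\<^sup>2)"
    and mn: "integrable \<mu> (\<lambda>z. (norm z)\<^sup>2)" "(\<integral>z. (norm z)\<^sup>2 \<partial>\<mu>) = (real CARD('n) + 1) * \<alpha>\<^sup>2"
    and mu: "integrable \<mu> (\<lambda>z. (u \<bullet> z)\<^sup>2)" "(\<integral>z. (u \<bullet> z)\<^sup>2 \<partial>\<mu>) = 2 * \<alpha>\<^sup>2"
  shows "\<exists>\<pi>\<in>couplings \<mu> \<nu>. (\<integral>\<^sup>+ p. ennreal ((norm (fst p - snd p))\<^sup>2) \<partial>\<pi>)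
            = ennreal ((sqrt 2 * \<alpha> - \<beta>)\<^sup>2 + (real CARD('n) - 1) * (\<alpha> - \<beta>)\<^sup>2)"
proof -
  interpret \<mu>: prob_space \<mu> by fact
  define h :: real where "h = sqrt 2 / 2"
  have h: "2 * h * h = 1" unfolding h_def by (rule sqrt2_h)
  define c where "c = 1 - h"
  define r where "r = \<beta> / \<alpha>"
  have b: "\<beta> = r * \<alpha>" using a0 by (simp add: r_def)
  define T where "T z = r *\<^sub>R (z - (c * (u \<bullet> z)) *\<^sub>R u)" for z :: "(real, 'n) vec"
  have Tm[measurable]: "T \<in> borel_measurable borel"
    unfolding T_def by measurable
  have uu: "u \<bullet> u = 1" using u by (simp add: power2_norm_eq_inner[symmetric])
  define g where "g z = (z, T z)" for z :: "(real, 'n) vec"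
  have gm: "g \<in> \<mu> \<rightarrow>\<^sub>M borel \<Otimes>\<^sub>M borel" unfolding g_def by measurable
  define \<pi> where "\<pi> = distr \<mu> (borel \<Otimes>\<^sub>M borel) g"
  have fst_marg: "distr \<pi> borel fst = \<mu>"
  proof -
    have "distr \<pi> borel fst = distr \<mu> borel (fst \<circ> g)"
      unfolding \<pi>_def by (rule distr_distr) (auto intro: gm)
    also have "\<dots> = distr \<mu> borel (\<lambda>z. z)" by (simp add: g_def comp_def)
    also have "\<dots> = \<mu>" by (rule distr_id2) (simp add: S\<mu>)
    finally show ?thesis .
  qed
  have snd_marg: "distr \<pi> borel snd = \<nu>"
  proof -
    have "distr \<pi> borel snd = distr \<mu> borel (snd \<circ> g)"
      unfolding \<pi>_def by (rule distr_distr) (auto intro: gm)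
    also have "\<dots> = distr \<mu> borel T" by (simp add: g_def comp_def)
    also have "\<dots> = \<nu>"
    proof (rule cramer_wold)
      show "prob_space (distr \<mu> borel T)" by (rule \<mu>.prob_space_distr) measurable
      show "prob_space \<nu>" by fact
      show "sets (distr \<mu> borel T) = sets borel" by simp
      show "sets \<nu> = sets borel" by fact
      fix a :: "(real, 'n) vec"
      define a' where "a' = r *\<^sub>R (a - (c * (u \<bullet> a)) *\<^sub>R u)"
      have "distr (distr \<mu> borel T) borel (\<lambda>z. a \<bullet> z) = distr \<mu> borel ((\<lambda>z. a \<bullet> z) \<circ> T)"
        by (rule distr_distr) measurable
      also have "\<dots> = distr \<mu> borel (\<lambda>z. a' \<bullet> z)"
        by (rule distr_cong) (auto simp: T_def a'_def inner_diff_left inner_diff_right inner_commute algebra_simps)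
      also have "\<dots> = nlaw (\<alpha>\<^sup>2 * ((norm a')\<^sup>2 + (u \<bullet> a')\<^sup>2))" by (rule PX)
      also have "\<alpha>\<^sup>2 * ((norm a')\<^sup>2 + (u \<bullet> a')\<^sup>2) = \<beta>\<^sup>2 * (norm a)\<^sup>2"
      proof -
        have n1: "(norm a')\<^sup>2 = r * r * ((norm a)\<^sup>2 - 2 * (1 - h) * (u \<bullet> a) * (u \<bullet> a) + (1 - h) * (1 - h) * (u \<bullet> a) * (u \<bullet> a))"
          unfolding power2_norm_eq_inner a'_def c_def
          by (simp add: inner_diff_left inner_diff_right uu inner_commute algebra_simps)
        have n2: "u \<bullet> a' = r * ((u \<bullet> a) - (1 - h) * (u \<bullet> a))"
          by (simp add: a'_def c_def inner_diff_right uu algebra_simps)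
        have "(norm a')\<^sup>2 + (u \<bullet> a')\<^sup>2 = r * r * (norm a)\<^sup>2"
          unfolding n1 n2 power2_eq_square[of "r * _"] by (rule alg_I2[OF h])
        then show ?thesis by (simp add: b power2_eq_square)
      qed
      also have "nlaw (\<beta>\<^sup>2 * (norm a)\<^sup>2) = distr \<nu> borel (\<lambda>z. a \<bullet> z)" by (rule PY[symmetric])
      finally show "distr (distr \<mu> borel T) borel (\<lambda>z. a \<bullet> z) = distr \<nu> borel (\<lambda>z. a \<bullet> z)" .
    qed
    finally show ?thesis .
  qed
  have coup: "\<pi> \<in> couplings \<mu> \<nu>"
    unfolding couplings_def using fst_marg snd_marg \<mu>.prob_space_distr[OF gm]
    by (simp add: \<pi>_def)
  define K where "K = 2 * (1 - r) * r * c + r * r * (c * c)"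
  have pw: "(norm (z - T z))\<^sup>2 = (1 - r) * (1 - r) * (norm z)\<^sup>2 + K * (u \<bullet> z)\<^sup>2" for z
  proof -
    have e: "z - T z = (1 - r) *\<^sub>R z + (r * c * (u \<bullet> z)) *\<^sub>R u"
      by (simp add: T_def algebra_simps)
    have "(norm ((1 - r) *\<^sub>R z + (r * c * (u \<bullet> z)) *\<^sub>R u))\<^sup>2 = (1 - r) * (1 - r) * (norm z)\<^sup>2 + K * (u \<bullet> z)\<^sup>2"
      unfolding power2_norm_eq_inner K_def
      by (simp add: inner_add_left inner_add_right uu inner_commute power2_eq_square algebra_simps)
    then show ?thesis by (simp only: e)
  qed
  have hint: "has_bochner_integral \<mu> (\<lambda>z. (1 - r) * (1 - r) * (norm z)\<^sup>2 + K * (u \<bullet> z)\<^sup>2)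
       ((1 - r) * (1 - r) * ((real CARD('n) + 1) * \<alpha>\<^sup>2) + K * (2 * \<alpha>\<^sup>2))"
    using mn mu
    by (intro has_bochner_integral_add has_bochner_integral_mult_right) (auto simp: has_bochner_integral_iff)
  have "(\<integral>\<^sup>+ p. ennreal ((norm (fst p - snd p))\<^sup>2) \<partial>\<pi>) = (\<integral>\<^sup>+ z. ennreal ((norm (z - T z))\<^sup>2) \<partial>\<mu>)"
    unfolding \<pi>_def by (subst nn_integral_distr[OF gm]) (auto simp: g_def)
  also have "\<dots> = (\<integral>\<^sup>+ z. ennreal ((1 - r) * (1 - r) * (norm z)\<^sup>2 + K * (u \<bullet> z)\<^sup>2) \<partial>\<mu>)"
    by (simp add: pw)
  also have "\<dots> = ennreal ((1 - r) * (1 - r) * ((real CARD('n) + 1) * \<alpha>\<^sup>2) + K * (2 * \<alpha>\<^sup>2))"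
  proof -
    have K0: "0 \<le> (1 - r) * (1 - r) * (norm z)\<^sup>2 + K * (u \<bullet> z)\<^sup>2" for z
      using pw[of z, symmetric] by simp
    show ?thesis
      using hint K0 by (subst nn_integral_eq_integral) (auto simp: has_bochner_integral_iff)
  qed
  also have "(1 - r) * (1 - r) * ((real CARD('n) + 1) * \<alpha>\<^sup>2) + K * (2 * \<alpha>\<^sup>2) = (sqrt 2 * \<alpha> - \<beta>)\<^sup>2 + (real CARD('n) - 1) * (\<alpha> - \<beta>)\<^sup>2"
  proof -
    have s: "sqrt 2 = 2 * h" by (simp add: h_def)
    show ?thesis
      unfolding K_def c_def s b power2_eq_square by (rule alg_I4[OF h])
  qed
  finally show ?thesis using coup by blast
qed


lemma upper_zero:
  fixes \<mu> \<nu> :: "(real, 'n::finite) vec measure"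
  assumes P\<mu>: "prob_space \<mu>" and P\<nu>: "prob_space \<nu>" and S\<mu>: "sets \<mu> = sets borel" and S\<nu>[measurable_cong]: "sets \<nu> = sets borel"
    and PX: "\<And>a. distr \<mu> borel (\<lambda>z. a \<bullet> z) = nlaw 0"
    and mn: "integrable \<nu> (\<lambda>z. (norm z)\<^sup>2)" "(\<integral>z. (norm z)\<^sup>2 \<partial>\<nu>) = V"
  shows "\<exists>\<pi>\<in>couplings \<mu> \<nu>. (\<integral>\<^sup>+ p. ennreal ((norm (fst p - snd p))\<^sup>2) \<partial>\<pi>) = ennreal V"
proof -
  interpret \<nu>: prob_space \<nu> by fact
  define g where "g z = (0::(real, 'n) vec, z)" for z :: "(real, 'n) vec"
  have gm: "g \<in> \<nu> \<rightarrow>\<^sub>M borel \<Otimes>\<^sub>M borel" unfolding g_def by measurable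
  define \<pi> where "\<pi> = distr \<nu> (borel \<Otimes>\<^sub>M borel) g"
  have fst_marg: "distr \<pi> borel fst = \<mu>"
  proof -
    have "distr \<pi> borel fst = distr \<nu> borel (fst \<circ> g)"
      unfolding \<pi>_def by (rule distr_distr) (auto intro: gm)
    also have "\<dots> = distr \<nu> borel (\<lambda>z. 0)" by (simp add: g_def comp_def)
    also have "\<dots> = \<mu>"
    proof (rule cramer_wold)
      show "prob_space (distr \<nu> borel (\<lambda>z. 0::(real, 'n) vec))" by (rule \<nu>.prob_space_distr) measurable
      show "prob_space \<mu>" by fact
      show "sets (distr \<nu> borel (\<lambda>z. 0::(real, 'n) vec)) = sets borel" by simp
      show "sets \<mu> = sets borel" by fact
      fix a :: "(real, 'n) vec"
      have "distr (distr \<nu> borel (\<lambda>z. 0::(real, 'n) vec)) borel (\<lambda>z. a \<bullet> z) = distr \<nu> borel ((\<lambda>z. a \<bullet> z) \<circ> (\<lambda>z. 0))"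
        by (rule distr_distr) measurable
      also have "\<dots> = distr \<nu> borel (\<lambda>z. 0)" by (simp add: comp_def)
      also have "\<dots> = nlaw 0"
        by (rule normal_rv_distr[OF P\<nu>]) (rule normal_rv_zero, auto)
      also have "\<dots> = distr \<mu> borel (\<lambda>z. a \<bullet> z)" by (rule PX[symmetric])
      finally show "distr (distr \<nu> borel (\<lambda>z. 0::(real, 'n) vec)) borel (\<lambda>z. a \<bullet> z) = distr \<mu> borel (\<lambda>z. a \<bullet> z)" .
    qed
    finally show ?thesis .
  qed
  have snd_marg: "distr \<pi> borel snd = \<nu>"
  proof -
    have "distr \<pi> borel snd = distr \<nu> borel (snd \<circ> g)"
      unfolding \<pi>_def by (rule distr_distr) (auto intro: gm)
    also have "\<dots> = distr \<nu> borel (\<lambda>z. z)" by (simp add: g_def comp_def)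
    also have "\<dots> = \<nu>" by (rule distr_id2) (simp add: S\<nu>)
    finally show ?thesis .
  qed
  have coup: "\<pi> \<in> couplings \<mu> \<nu>"
    unfolding couplings_def using fst_marg snd_marg \<nu>.prob_space_distr[OF gm]
    by (simp add: \<pi>_def)
  have "(\<integral>\<^sup>+ p. ennreal ((norm (fst p - snd p))\<^sup>2) \<partial>\<pi>) = (\<integral>\<^sup>+ z. ennreal ((norm z)\<^sup>2) \<partial>\<nu>)"
    unfolding \<pi>_def by (subst nn_integral_distr[OF gm]) (auto simp: g_def)
  also have "\<dots> = ennreal V"
    using mn by (subst nn_integral_eq_integral) auto
  finally show ?thesis using coup by blast
qed

theorem W2_core:
  fixes \<mu> \<nu> :: "(real, 'n::finite) vec measure"
  assumes P\<mu>: "prob_space \<mu>" and P\<nu>: "prob_space \<nu>" and S\<mu>: "sets \<mu> = sets borel" and S\<nu>: "sets \<nu> = sets borel"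
    and u: "norm u = 1" and a0: "0 \<le> \<alpha>" and b0: "0 \<le> \<beta>"
    and PX: "\<And>a. distr \<mu> borel (\<lambda>z. a \<bullet> z) = nlaw (\<alpha>\<^sup>2 * ((norm a)\<^sup>2 + (u \<bullet> a)\<^sup>2))"
    and PY: "\<And>a. distr \<nu> borel (\<lambda>z. a \<bullet> z) = nlaw (\<beta>\<^sup>2 * (norm a)\<^sup>2)"
  shows "W2_sq \<mu> \<nu> = ennreal ((sqrt 2 * \<alpha> - \<beta>)\<^sup>2 + (real CARD('n) - 1) * (\<alpha> - \<beta>)\<^sup>2)"
proof -
  define n where "n = real CARD('n)"
  have n1: "1 \<le> n" by (simp add: n_def)
  define F where "F = (sqrt 2 * \<alpha> - \<beta>)\<^sup>2 + (n - 1) * (\<alpha> - \<beta>)\<^sup>2"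
  have qx0: "0 \<le> \<alpha>\<^sup>2 * ((norm a)\<^sup>2 + (u \<bullet> a)\<^sup>2)" for a :: "(real, 'n) vec" by simp
  have qy0: "0 \<le> \<beta>\<^sup>2 * (norm a)\<^sup>2" for a :: "(real, 'n) vec" by simp
  have sax: "(\<Sum>i\<in>UNIV. (u \<bullet> axis i 1)\<^sup>2) = 1"
    using sum_axis_sq[of u] u by (simp add: inner_commute)
  have m1: "integrable \<mu> (\<lambda>z. (norm z)\<^sup>2)" "(\<integral>z. (norm z)\<^sup>2 \<partial>\<mu>) = (n + 1) * \<alpha>\<^sup>2"
  proof -
    show "integrable \<mu> (\<lambda>z. (norm z)\<^sup>2)" by (rule norm_moment(1)[OF P\<mu> S\<mu> PX qx0])
    have "(\<integral>z. (norm z)\<^sup>2 \<partial>\<mu>) = (\<Sum>i\<in>UNIV. \<alpha>\<^sup>2 * ((norm (axis i (1::real)))\<^sup>2 + (u \<bullet> axis i 1)\<^sup>2))"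
      by (rule norm_moment(2)[OF P\<mu> S\<mu> PX qx0])
    also have "\<dots> = \<alpha>\<^sup>2 * (n + (\<Sum>i\<in>UNIV. (u \<bullet> axis i 1)\<^sup>2))"
      by (simp add: sum_distrib_left[symmetric] sum.distrib n_def)
    finally show "(\<integral>z. (norm z)\<^sup>2 \<partial>\<mu>) = (n + 1) * \<alpha>\<^sup>2" by (simp add: sax)
  qed
  have m2: "integrable \<mu> (\<lambda>z. (u \<bullet> z)\<^sup>2)" "(\<integral>z. (u \<bullet> z)\<^sup>2 \<partial>\<mu>) = 2 * \<alpha>\<^sup>2"
  proof -
    have uu: "u \<bullet> u = 1" using u by (simp add: power2_norm_eq_inner[symmetric])
    show "integrable \<mu> (\<lambda>z. (u \<bullet> z)\<^sup>2)" "(\<integral>z. (u \<bullet> z)\<^sup>2 \<partial>\<mu>) = 2 * \<alpha>\<^sup>2"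
      using proj_moment[OF P\<mu> S\<mu> PX qx0, of u] u uu by auto
  qed
  have m3: "integrable \<nu> (\<lambda>z. (norm z)\<^sup>2)" "(\<integral>z. (norm z)\<^sup>2 \<partial>\<nu>) = n * \<beta>\<^sup>2"
  proof -
    show "integrable \<nu> (\<lambda>z. (norm z)\<^sup>2)" by (rule norm_moment(1)[OF P\<nu> S\<nu> PY qy0])
    have "(\<integral>z. (norm z)\<^sup>2 \<partial>\<nu>) = (\<Sum>i\<in>(UNIV::'n set). \<beta>\<^sup>2 * (norm (axis i (1::real)))\<^sup>2)"
      by (rule norm_moment(2)[OF P\<nu> S\<nu> PY qy0])
    then show "(\<integral>z. (norm z)\<^sup>2 \<partial>\<nu>) = n * \<beta>\<^sup>2" by (simp add: n_def)
  qed
  have m4: "integrable \<nu> (\<lambda>z. (u \<bullet> z)\<^sup>2)" "(\<integral>z. (u \<bullet> z)\<^sup>2 \<partial>\<nu>) = \<beta>\<^sup>2"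
    using proj_moment[OF P\<nu> S\<nu> PY qy0, of u] u by auto
  have lower: "ennreal F \<le> (\<integral>\<^sup>+ p. ennreal ((norm (fst p - snd p))\<^sup>2) \<partial>\<pi>)" if \<pi>: "\<pi> \<in> couplings \<mu> \<nu>" for \<pi>
  proof -
    note cl = coupling_lower[OF \<pi> S\<mu> S\<nu> u m1 m3 m2 m4]
    have "F \<le> (\<integral>p. (norm (fst p - snd p))\<^sup>2 \<partial>\<pi>)"
      unfolding F_def by (rule final_real[OF n1 a0 b0 cl(2)])
    then show ?thesis unfolding cl(1) by (rule ennreal_leI)
  qed
  have upper: "\<exists>\<pi>\<in>couplings \<mu> \<nu>. (\<integral>\<^sup>+ p. ennreal ((norm (fst p - snd p))\<^sup>2) \<partial>\<pi>) = ennreal F"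
  proof (cases "\<alpha> = 0")
    case True
    have "F = n * \<beta>\<^sup>2" using True by (simp add: F_def power2_eq_square algebra_simps)
    have PX0: "\<And>a. distr \<mu> borel (\<lambda>z. a \<bullet> z) = nlaw 0" using PX True by simp
    from upper_zero[OF P\<mu> P\<nu> S\<mu> S\<nu> PX0 m3] show ?thesis
      by (simp only: \<open>F = n * \<beta>\<^sup>2\<close>)
  next
    case False
    then have "0 < \<alpha>" using a0 by simp
    from upper_pos[OF P\<mu> P\<nu> S\<mu> S\<nu> u this b0 PX PY m1[unfolded n_def] m2]
    show ?thesis by (simp add: F_def n_def)
  qed
  then obtain \<pi>0 where \<pi>0: "\<pi>0 \<in> couplings \<mu> \<nu>" "(\<integral>\<^sup>+ p. ennreal ((norm (fst p - snd p))\<^sup>2) \<partial>\<pi>0) = ennreal F"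
    by blast
  have "W2_sq \<mu> \<nu> = ennreal F"
    unfolding W2_sq_def
  proof (rule antisym)
    show "(INF \<pi>\<in>couplings \<mu> \<nu>. \<integral>\<^sup>+ p. ennreal ((norm (fst p - snd p))\<^sup>2) \<partial>\<pi>) \<le> ennreal F"
      by (rule INF_lower2[OF \<pi>0(1)]) (simp add: \<pi>0(2))
    show "ennreal F \<le> (INF \<pi>\<in>couplings \<mu> \<nu>. \<integral>\<^sup>+ p. ennreal ((norm (fst p - snd p))\<^sup>2) \<partial>\<pi>)"
      by (rule INF_greatest) (rule lower)
  qed
  then show ?thesis by (simp add: F_def n_def)
qed

lemma alg_final:
  fixes n s a b :: real
  assumes n: "0 < n" and s: "s * s = 2"
  shows "(n - 1) / n * (s - 1)\<^sup>2 * a\<^sup>2 + n * ((1 + (s - 1) / n) * a - b)\<^sup>2 = (s * a - b)\<^sup>2 + (n - 1) * (a - b)\<^sup>2"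
proof -
  have "n * ((n - 1) / n * (s - 1)\<^sup>2 * a\<^sup>2 + n * ((1 + (s - 1) / n) * a - b)\<^sup>2) = n * ((s * a - b)\<^sup>2 + (n - 1) * (a - b)\<^sup>2)"
  proof -
    have e1: "n * ((n - 1) / n * (s - 1)\<^sup>2 * a\<^sup>2) = (n - 1) * (s - 1)\<^sup>2 * a\<^sup>2" using n by simp
    have e2: "n * (n * ((1 + (s - 1) / n) * a - b)\<^sup>2) = (n * a + (s - 1) * a - n * b)\<^sup>2"
      using n by (simp add: power2_eq_square field_simps)
    have "(n - 1) * (s - 1)\<^sup>2 * a\<^sup>2 + (n * a + (s - 1) * a - n * b)\<^sup>2 = n * ((s * a - b)\<^sup>2 + (n - 1) * (a - b)\<^sup>2)"
      unfolding power2_eq_square by (simp add: algebra_simps)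
    then show ?thesis using e1 e2 by (simp add: distrib_left)
  qed
  then show ?thesis using n by simp
qed

lemma mv_sum: "(B :: ((real, 'n::finite) vec, 'm::finite) vec) *v (\<Sum>s\<in>S. c s *\<^sub>R v s) = (\<Sum>s\<in>S. c s *\<^sub>R (B *v v s))"
  by (simp add: vec_eq_iff matrix_vector_mult_def sum_distrib_left sum_component algebra_simps)
     (subst sum.swap, simp add: sum_distrib_left mult.left_commute)

lemma linear_mv: "linear (\<lambda>m :: ((real, 'n::finite) vec, 'm::finite) vec. m *v v)"
  by (rule linearI) (simp_all add: vec_eq_iff matrix_vector_mult_def sum.distrib algebra_simps sum_distrib_left)

lemma quad_form:
  fixes C G :: "((real, 't::finite) vec, 't) vec"
  shows "(transpose C ** G ** C) $ t $ t = (\<Sum>j\<in>UNIV. \<Sum>k\<in>UNIV. C $ j $ t * G $ j $ k * C $ k $ t)"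
  by (simp add: matrix_matrix_mult_def transpose_def sum_distrib_right)
     (subst sum.swap, simp)


theorem theorem6:
  fixes M :: "'w measure" and N :: "'v measure"
    and A :: "'w \<Rightarrow> ((real, 'n::{finite,linorder}) vec, 'n) vec"
    and f :: "'t::{finite,linorder} \<Rightarrow> (real, 'n) vec"
    and F :: "((real, 't) vec, 'n) vec"
    and \<Lambda> \<Gamma> \<Sigma> :: "((real, 't) vec, 't) vec"
    and x :: "'t \<Rightarrow> 'w \<Rightarrow> (real, 'n) vec"
    and w y :: "'t \<Rightarrow> 'v \<Rightarrow> (real, 'n) vec"
  assumes "prob_space M" and "prob_space N"
    and F_def: "\<forall>i t. F $ i $ t = f t $ i"
    and "strictly_upper \<Lambda>" and "strictly_upper \<Gamma>"
    and GOE: "is_GOE M A"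
    and x_def: "\<forall>t. \<forall>\<omega>\<in>space M. x t \<omega> = A \<omega> *v f t + (\<Sum>s\<in>{s. s < t}. \<Lambda> $ s $ t *\<^sub>R x s \<omega>)"
    and "psd_matrix \<Sigma>"
    and "gaussian_process_cov N w \<Sigma>"
    and y_def: "\<forall>t. \<forall>\<omega>\<in>space N. y t \<omega> = (\<Sum>s\<in>{s. s < t}. \<Gamma> $ s $ t *\<^sub>R y s \<omega>) + w t \<omega>"
  shows "\<forall>t. let n = real CARD('n);
     \<alpha> = sqrt ((transpose (matrix_inv (mat 1 - \<Lambda>)) ** ((1 / n) *\<^sub>R (transpose F ** F))
                  ** matrix_inv (mat 1 - \<Lambda>)) $ t $ t);
     \<beta> = sqrt ((transpose (matrix_inv (mat 1 - \<Gamma>)) ** \<Sigma> ** matrix_inv (mat 1 - \<Gamma>)) $ t $ t)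
   in W2_sq (distr M borel (x t)) (distr N borel (y t))
      = ennreal ((n - 1) / n * (sqrt 2 - 1)\<^sup>2 * \<alpha>\<^sup>2 + n * ((1 + (sqrt 2 - 1) / n) * \<alpha> - \<beta>)\<^sup>2)"
proof
  fix t :: 't
  note PM = \<open>prob_space M\<close> and PN = \<open>prob_space N\<close>
  note Lup = \<open>strictly_upper \<Lambda>\<close> and Gup = \<open>strictly_upper \<Gamma>\<close>
  note psd = \<open>psd_matrix \<Sigma>\<close> and GPC = \<open>gaussian_process_cov N w \<Sigma>\<close>
  interpret M: prob_space M by fact
  interpret N: prob_space N by fact
  define n where "n = real CARD('n)"
  have n0: "0 < n" by (simp add: n_def)
  define C where "C = matrix_inv (mat 1 - \<Lambda>)"
  define C' where "C' = matrix_inv (mat 1 - \<Gamma>)"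
  define vt where "vt = (\<Sum>s\<in>UNIV. C $ s $ t *\<^sub>R f s)"
  define Q where "Q = (transpose C ** ((1 / n) *\<^sub>R (transpose F ** F)) ** C) $ t $ t"
  define R where "R = (transpose C' ** \<Sigma> ** C') $ t $ t"
  define \<alpha> where "\<alpha> = sqrt Q"
  define \<beta> where "\<beta> = sqrt R"
  have xrep: "x t \<omega> = A \<omega> *v vt" if \<omega>: "\<omega> \<in> space M" for \<omega>
  proof -
    have "x t \<omega> = (\<Sum>s\<in>UNIV. C $ s $ t *\<^sub>R (A \<omega> *v f s))"
      unfolding C_def
      by (rule rec_solve[OF Lup, where z="\<lambda>s. x s \<omega>" and g="\<lambda>s. A \<omega> *v f s"]) (use x_def \<omega> in auto)
    then show ?thesis by (simp add: vt_def mv_sum)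
  qed
  have yrep: "y t \<omega> = (\<Sum>s\<in>UNIV. C' $ s $ t *\<^sub>R w s \<omega>)" if \<omega>: "\<omega> \<in> space N" for \<omega>
    unfolding C'_def
    by (rule rec_solve[OF Gup, where z="\<lambda>s. y s \<omega>" and g="\<lambda>s. w s \<omega>"]) (use y_def \<omega> in \<open>auto simp: add.commute\<close>)
  have Am[measurable]: "A \<in> borel_measurable M" using GOE by (simp add: is_GOE_def)
  have wm[measurable]: "w s \<in> borel_measurable N" for s using GPC by (simp add: gaussian_process_cov_def)
  have xm[measurable]: "x t \<in> borel_measurable M"
  proof -
    have cm: "(\<lambda>m :: ((real, 'n) vec, 'n) vec. m *v vt) \<in> borel_measurable borel"
      by (rule borel_measurable_continuous_onI, rule linear_continuous_on)
         (use linear_mv[of vt] in \<open>simp add: linear_conv_bounded_linear\<close>)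
    have "(\<lambda>\<omega>. A \<omega> *v vt) \<in> borel_measurable M"
      using measurable_comp[OF Am cm] by (simp add: comp_def)
    then show ?thesis by (rule measurable_cong[THEN iffD1, rotated]) (simp add: xrep)
  qed
  have ym[measurable]: "y t \<in> borel_measurable N"
  proof -
    have "(\<lambda>\<omega>. \<Sum>s\<in>UNIV. C' $ s $ t *\<^sub>R w s \<omega>) \<in> borel_measurable N" by measurable
    then show ?thesis by (rule measurable_cong[THEN iffD1, rotated]) (simp add: yrep)
  qed
  have Q: "Q = (norm vt)\<^sup>2 / n"
  proof -
    have G: "((1 / n) *\<^sub>R (transpose F ** F)) $ j $ k = (1 / n) * (\<Sum>i\<in>UNIV. F $ i $ j * F $ i $ k)" for j k
      by (simp add: matrix_matrix_mult_def transpose_def)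
    have v: "vt $ i = (\<Sum>s\<in>UNIV. C $ s $ t * F $ i $ s)" for i
      by (simp add: vt_def sum_component F_def)
    have "(norm vt)\<^sup>2 = (\<Sum>i\<in>UNIV. (vt $ i) * (vt $ i))"
      unfolding power2_norm_eq_inner by (simp add: inner_vec_def)
    also have "\<dots> = (\<Sum>i\<in>UNIV. \<Sum>j\<in>UNIV. \<Sum>k\<in>UNIV. C $ j $ t * ((F $ i $ j * F $ i $ k)) * C $ k $ t)"
      by (simp add: v sum_product mult_ac)
    also have "\<dots> = (\<Sum>j\<in>UNIV. \<Sum>i\<in>UNIV. \<Sum>k\<in>UNIV. C $ j $ t * ((F $ i $ j * F $ i $ k)) * C $ k $ t)"
      by (rule sum.swap)
    also have "\<dots> = (\<Sum>j\<in>UNIV. \<Sum>k\<in>UNIV. \<Sum>i\<in>UNIV. C $ j $ t * ((F $ i $ j * F $ i $ k)) * C $ k $ t)"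
      by (rule sum.cong[OF refl], rule sum.swap)
    also have "\<dots> = (\<Sum>j\<in>UNIV. \<Sum>k\<in>UNIV. C $ j $ t * (\<Sum>i\<in>UNIV. F $ i $ j * F $ i $ k) * C $ k $ t)"
      by (simp add: sum_distrib_left sum_distrib_right)
    finally have nv: "(norm vt)\<^sup>2 = \<dots>" .
    have "Q = (\<Sum>j\<in>UNIV. \<Sum>k\<in>UNIV. C $ j $ t * ((1 / n) * (\<Sum>i\<in>UNIV. F $ i $ j * F $ i $ k)) * C $ k $ t)"
      unfolding Q_def quad_form G ..
    also have "\<dots> = (\<Sum>j\<in>UNIV. \<Sum>k\<in>UNIV. (C $ j $ t * (\<Sum>i\<in>UNIV. F $ i $ j * F $ i $ k) * C $ k $ t) / n)"
      by (intro sum.cong refl) simp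
    also have "\<dots> = (\<Sum>j\<in>UNIV. \<Sum>k\<in>UNIV. C $ j $ t * (\<Sum>i\<in>UNIV. F $ i $ j * F $ i $ k) * C $ k $ t) / n"
      by (simp only: sum_divide_distrib[symmetric])
    finally show ?thesis using nv by simp
  qed
  have \<alpha>sq: "\<alpha>\<^sup>2 = (norm vt)\<^sup>2 / n" using Q n0 by (simp add: \<alpha>_def)
  have \<alpha>0: "0 \<le> \<alpha>" using n0 by (auto simp: \<alpha>_def Q intro!: divide_nonneg_pos)
  define u where "u = (if vt = 0 then axis undefined 1 else (1 / norm vt) *\<^sub>R vt)"
  have u: "norm u = 1" by (simp add: u_def)
  have uvt: "(a \<bullet> vt)\<^sup>2 = (norm vt)\<^sup>2 * (u \<bullet> a)\<^sup>2" for a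
    by (cases "vt = 0") (auto simp: u_def inner_commute power2_eq_square)
  have Rq: "R = (\<Sum>j\<in>UNIV. \<Sum>k\<in>UNIV. C' $ j $ t * \<Sigma> $ j $ k * C' $ k $ t)"
    unfolding R_def by (rule quad_form)
  have R0: "0 \<le> R"
  proof -
    define cv :: "(real, 't) vec" where "cv = (\<chi> j. C' $ j $ t)"
    have "0 \<le> cv \<bullet> (\<Sigma> *v cv)" using psd by (simp add: psd_matrix_def)
    also have "cv \<bullet> (\<Sigma> *v cv) = R"
      by (simp add: Rq cv_def inner_vec_def matrix_vector_mult_def sum_distrib_left mult_ac)
    finally show ?thesis .
  qed
  have \<beta>sq: "\<beta>\<^sup>2 = R" using R0 by (simp add: \<beta>_def)
  have \<beta>0: "0 \<le> \<beta>" using R0 by (simp add: \<beta>_def)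
  define \<mu> where "\<mu> = distr M borel (x t)"
  define \<nu> where "\<nu> = distr N borel (y t)"
  have P\<mu>: "prob_space \<mu>" unfolding \<mu>_def by (rule M.prob_space_distr) simp
  have P\<nu>: "prob_space \<nu>" unfolding \<nu>_def by (rule N.prob_space_distr) simp
  have S\<mu>: "sets \<mu> = sets borel" by (simp add: \<mu>_def)
  have S\<nu>: "sets \<nu> = sets borel" by (simp add: \<nu>_def)
  have PX: "distr \<mu> borel (\<lambda>z. a \<bullet> z) = nlaw (\<alpha>\<^sup>2 * ((norm a)\<^sup>2 + (u \<bullet> a)\<^sup>2))" for a
  proof -
    have "distr \<mu> borel (\<lambda>z. a \<bullet> z) = distr M borel ((\<lambda>z. a \<bullet> z) \<circ> x t)"
      unfolding \<mu>_def by (rule distr_distr) auto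
    also have "\<dots> = nlaw (\<alpha>\<^sup>2 * ((norm a)\<^sup>2 + (u \<bullet> a)\<^sup>2))"
    proof (rule normal_rv_distr[OF PM])
      have "normal_rv M (\<lambda>\<omega>. a \<bullet> (A \<omega> *v vt)) 0 (((norm a)\<^sup>2 * (norm vt)\<^sup>2 + (a \<bullet> vt)\<^sup>2) / real CARD('n))"
        by (rule GOE_proj[OF PM GOE])
      moreover have "((norm a)\<^sup>2 * (norm vt)\<^sup>2 + (a \<bullet> vt)\<^sup>2) / real CARD('n) = \<alpha>\<^sup>2 * ((norm a)\<^sup>2 + (u \<bullet> a)\<^sup>2)"
        by (simp add: \<alpha>sq uvt n_def field_simps)
      ultimately show "normal_rv M ((\<lambda>z. a \<bullet> z) \<circ> x t) 0 (\<alpha>\<^sup>2 * ((norm a)\<^sup>2 + (u \<bullet> a)\<^sup>2))"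
        by (auto intro: normal_rv_cong simp: xrep)
    qed
    finally show ?thesis .
  qed
  have PY: "distr \<nu> borel (\<lambda>z. a \<bullet> z) = nlaw (\<beta>\<^sup>2 * (norm a)\<^sup>2)" for a
  proof -
    have "distr \<nu> borel (\<lambda>z. a \<bullet> z) = distr N borel ((\<lambda>z. a \<bullet> z) \<circ> y t)"
      unfolding \<nu>_def by (rule distr_distr) auto
    also have "\<dots> = nlaw (\<beta>\<^sup>2 * (norm a)\<^sup>2)"
    proof (rule normal_rv_distr[OF PN])
      define c where "c s i = C' $ s $ t * a $ i" for s i
      have "normal_rv N (\<lambda>\<omega>. \<Sum>s\<in>UNIV. \<Sum>i\<in>UNIV. c s i * (w s \<omega> $ i)) 0
          (\<Sum>s\<in>UNIV. \<Sum>s'\<in>UNIV. \<Sum>i\<in>UNIV. c s i * c s' i * (\<Sigma> $ s $ s'))"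
        using GPC by (simp add: gaussian_process_cov_def)
      moreover have "(\<Sum>s\<in>UNIV. \<Sum>s'\<in>UNIV. \<Sum>i\<in>UNIV. c s i * c s' i * (\<Sigma> $ s $ s')) = \<beta>\<^sup>2 * (norm a)\<^sup>2"
      proof -
        have na: "(norm a)\<^sup>2 = (\<Sum>i\<in>UNIV. a $ i * a $ i)"
          unfolding power2_norm_eq_inner by (simp add: inner_vec_def)
        have "(\<Sum>s\<in>UNIV. \<Sum>s'\<in>UNIV. \<Sum>i\<in>UNIV. c s i * c s' i * (\<Sigma> $ s $ s'))
            = (\<Sum>s\<in>UNIV. \<Sum>s'\<in>UNIV. (C' $ s $ t * \<Sigma> $ s $ s' * C' $ s' $ t) * (\<Sum>i\<in>UNIV. a $ i * a $ i))"
          by (simp add: c_def sum_distrib_left mult_ac)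
        also have "\<dots> = R * (norm a)\<^sup>2"
          by (simp add: Rq na sum_distrib_right)
        finally show ?thesis by (simp add: \<beta>sq)
      qed
      moreover have "(\<Sum>s\<in>UNIV. \<Sum>i\<in>UNIV. c s i * (w s \<omega> $ i)) = ((\<lambda>z. a \<bullet> z) \<circ> y t) \<omega>" if \<omega>: "\<omega> \<in> space N" for \<omega>
      proof -
        have "((\<lambda>z. a \<bullet> z) \<circ> y t) \<omega> = (\<Sum>i\<in>UNIV. \<Sum>s\<in>UNIV. c s i * (w s \<omega> $ i))"
          by (simp add: yrep[OF \<omega>] inner_vec_def sum_component sum_distrib_left c_def mult_ac)
        also have "\<dots> = (\<Sum>s\<in>UNIV. \<Sum>i\<in>UNIV. c s i * (w s \<omega> $ i))"
          by (rule sum.swap)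
        finally show ?thesis by simp
      qed
      ultimately show "normal_rv N ((\<lambda>z. a \<bullet> z) \<circ> y t) 0 (\<beta>\<^sup>2 * (norm a)\<^sup>2)"
        by (auto intro: normal_rv_cong)
    qed
    finally show ?thesis .
  qed
  have W: "W2_sq \<mu> \<nu> = ennreal ((sqrt 2 * \<alpha> - \<beta>)\<^sup>2 + (real CARD('n) - 1) * (\<alpha> - \<beta>)\<^sup>2)"
    by (rule W2_core[OF P\<mu> P\<nu> S\<mu> S\<nu> u \<alpha>0 \<beta>0 PX PY])
  have fin: "(n - 1) / n * (sqrt 2 - 1)\<^sup>2 * \<alpha>\<^sup>2 + n * ((1 + (sqrt 2 - 1) / n) * \<alpha> - \<beta>)\<^sup>2
      = (sqrt 2 * \<alpha> - \<beta>)\<^sup>2 + (n - 1) * (\<alpha> - \<beta>)\<^sup>2"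
    by (rule alg_final[OF n0]) simp
  show "let n = real CARD('n);
     \<alpha> = sqrt ((transpose (matrix_inv (mat 1 - \<Lambda>)) ** ((1 / n) *\<^sub>R (transpose F ** F))
                  ** matrix_inv (mat 1 - \<Lambda>)) $ t $ t);
     \<beta> = sqrt ((transpose (matrix_inv (mat 1 - \<Gamma>)) ** \<Sigma> ** matrix_inv (mat 1 - \<Gamma>)) $ t $ t)
   in W2_sq (distr M borel (x t)) (distr N borel (y t))
      = ennreal ((n - 1) / n * (sqrt 2 - 1)\<^sup>2 * \<alpha>\<^sup>2 + n * ((1 + (sqrt 2 - 1) / n) * \<alpha> - \<beta>)\<^sup>2)"
    unfolding Let_def
    using W fin
    by (simp add: \<mu>_def \<nu>_def \<alpha>_def \<beta>_def Q_def R_def C_def C'_def n_def)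
qed

end
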